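(* Let $n\ge2$ be an integer, $T_1,\dots,T_n\in B(\mathcal H)$, $\varphi(X):=\sum_{i=1}^nT_iXT_i^*$, and let $D\in B(\mathcal H)$ be positive with $\varphi(D)\le D$. For $k\ge0$ let $M_k(\varphi,D):=\operatorname{span}\{T_\alpha\xi:\alpha\in\mathbb F_n^+,\ |\alpha|\le k,\ \xi\in(D-\varphi(D))^{1/2}\mathcal H\}$. Then the Euler characteristic $$\chi(\varphi,D):=\lim_{k\to\infty}\frac{\dim M_k(\varphi,D)}{1+n+\cdots+n^k}$$ exists (in $[0,\infty]$) and $$\chi(\varphi,D)=\lim_{k\to\infty}\frac{\operatorname{rank}[K_{\varphi,D}^*(P_{\le k}\otimes I)K_{\varphi,D}]}{1+n+\cdots+n^k}=(n-1)\lim_{k\to\infty}\frac{\operatorname{rank}[D-\varphi^k(D)]}{n^k}.$$ Moreover, $\chi(\varphi,D)<\infty$ if and only if $\operatorname{rank}[D-\varphi(D)]<\infty$.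
   Context: $\mathbb F_n^+$ is the free semigroup on $g_1,\dots,g_n$; for $\alpha=g_{i_1}\cdots g_{i_k}$, $|\alpha|=k$, $T_\alpha=T_{i_1}\cdots T_{i_k}$, $e_\alpha=e_{i_1}\otimes\cdots\otimes e_{i_k}$ (empty word: $T=I$, $e=1$). $F^2(H_n)$ is the full Fock space with orthonormal basis $\{e_\alpha\}_{\alpha\in\mathbb F_n^+}$; $P_{\le k}$ is the projection onto $\operatorname{span}\{e_\alpha:|\alpha|\le k\}$. The Poisson kernel is $K_{\varphi,D}h:=\sum_{\alpha\in\mathbb F_n^+}e_\alpha\otimes(D-\varphi(D))^{1/2}T_\alpha^*h$, $h\in\mathcal H$. *)

theory Defs
  imports "HOL-Analysis.Analysis"
begin

text \<open>HOL-Analysis only provides real inner product spaces, so complex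
  Hilbert spaces are introduced here as a type class.  The inner product is
  antilinear in the first and linear in the second argument.\<close>

class complex_vector = real_vector +
  fixes scaleC :: "complex \<Rightarrow> 'a \<Rightarrow> 'a" (infixr \<open>*\<^sub>C\<close> 75)
  assumes scaleC_add_right: "a *\<^sub>C (x + y) = a *\<^sub>C x + a *\<^sub>C y"
    and scaleC_add_left: "(a + b) *\<^sub>C x = a *\<^sub>C x + b *\<^sub>C x"
    and scaleC_scaleC: "a *\<^sub>C (b *\<^sub>C x) = (a * b) *\<^sub>C x"
    and scaleC_one: "1 *\<^sub>C x = x"
    and scaleR_scaleC: "scaleR r x = complex_of_real r *\<^sub>C x"

class complex_inner = complex_vector + real_normed_vector +
  fixes cinner :: "'a \<Rightarrow> 'a \<Rightarrow> complex"
  assumes cinner_commute: "cinner x y = cnj (cinner y x)"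
    and cinner_add_left: "cinner (x + y) z = cinner x z + cinner y z"
    and cinner_scaleC_left: "cinner (r *\<^sub>C x) y = cnj r * cinner x y"
    and cinner_self_real: "cinner x x \<in> \<real>"
    and cinner_self_nonneg: "0 \<le> Re (cinner x x)"
    and cinner_self_eq_zero: "cinner x x = 0 \<longleftrightarrow> x = 0"
    and norm_eq_sqrt_cinner: "norm x = sqrt (Re (cinner x x))"

class chilbert_space = complex_inner + complete_space

text \<open>Non-vacuity: the complex numbers form a complex Hilbert space.\<close>

instantiation complex :: chilbert_space
begin
definition scaleC_complex_def: "scaleC a (x::complex) = a * x"
definition cinner_complex_def: "cinner (x::complex) y = cnj x * y"
instance
proof
  fix a b :: complex and x y z :: complex and r :: real
  show "a *\<^sub>C (x + y) = a *\<^sub>C x + a *\<^sub>C y" by (simp add: scaleC_complex_def algebra_simps)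
  show "(a + b) *\<^sub>C x = a *\<^sub>C x + b *\<^sub>C x" by (simp add: scaleC_complex_def algebra_simps)
  show "a *\<^sub>C (b *\<^sub>C x) = (a * b) *\<^sub>C x" by (simp add: scaleC_complex_def algebra_simps)
  show "1 *\<^sub>C x = x" by (simp add: scaleC_complex_def)
  show "scaleR r x = complex_of_real r *\<^sub>C x" by (simp add: scaleC_complex_def scaleR_conv_of_real)
  show "cinner x y = cnj (cinner y x)" by (simp add: cinner_complex_def)
  show "cinner (x + y) z = cinner x z + cinner y z" by (simp add: cinner_complex_def algebra_simps)
  show "cinner (a *\<^sub>C x) y = cnj a * cinner x y" by (simp add: cinner_complex_def scaleC_complex_def)
  show "cinner x x \<in> \<real>" by (simp add: cinner_complex_def mult.commute[of "cnj x"] complex_mult_cnj)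
  show "0 \<le> Re (cinner x x)" by (simp add: cinner_complex_def complex_mult_cnj)
  show "cinner x x = 0 \<longleftrightarrow> x = 0" by (simp add: cinner_complex_def)
  show "norm x = sqrt (Re (cinner x x))"
    by (simp add: cinner_complex_def complex_mult_cnj norm_complex_def power2_eq_square)
qed
end

text \<open>The dimension of a subset \<open>V\<close> is the dimension of its complex span, i.e. the
  supremum of the cardinalities of finite complex-linearly independent subsets
  of \<open>cspan V\<close>; it equals \<open>\<infinity>\<close> for infinite dimensional spans.\<close>

definition cspan :: "'a::complex_vector set \<Rightarrow> 'a set" where
  "cspan S = module.span scaleC S"

definition cdim :: "'a::complex_vector set \<Rightarrow> ennreal" where
  "cdim V = (SUP B \<in> {B. finite B \<and> B \<subseteq> cspan V \<and> \<not> module.dependent scaleC B}.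
               ennreal (real (card B)))"

definition bounded_clinear :: "('a::complex_inner \<Rightarrow> 'b::complex_inner) \<Rightarrow> bool" where
  "bounded_clinear f \<longleftrightarrow>
     (\<forall>x y. f (x + y) = f x + f y) \<and> (\<forall>c x. f (c *\<^sub>C x) = c *\<^sub>C f x) \<and>
     (\<exists>K. \<forall>x. norm (f x) \<le> norm x * K)"

definition cadjoint :: "('a::chilbert_space \<Rightarrow> 'a) \<Rightarrow> ('a \<Rightarrow> 'a)" where
  "cadjoint T = (THE S. \<forall>x y. cinner (S x) y = cinner x (T y))"

definition positive_op :: "('a::chilbert_space \<Rightarrow> 'a) \<Rightarrow> bool" where
  "positive_op A \<longleftrightarrow> bounded_clinear A \<and>
     (\<forall>x. cinner x (A x) \<in> \<real> \<and> 0 \<le> Re (cinner x (A x)))"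

definition op_le :: "('a::chilbert_space \<Rightarrow> 'a) \<Rightarrow> ('a \<Rightarrow> 'a) \<Rightarrow> bool" where
  "op_le A B \<longleftrightarrow> positive_op (\<lambda>x. B x - A x)"

definition op_sqrt :: "('a::chilbert_space \<Rightarrow> 'a) \<Rightarrow> ('a \<Rightarrow> 'a)" where
  "op_sqrt A = (THE B. positive_op B \<and> B \<circ> B = A)"

definition op_rank :: "('a::chilbert_space \<Rightarrow> 'a) \<Rightarrow> ennreal" where
  "op_rank A = cdim (range A)"

text \<open>Words \<open>\<alpha> \<in> \<bbbF>\<^sub>n\<^sup>+\<close> are lists over \<open>{..<n}\<close> (generator \<open>g\<^sub>i\<close> is the letter \<open>i\<close>,
  \<open>i < n\<close>); \<open>|\<alpha>|\<close> is the length.  \<open>T\<^sub>\<alpha> = T\<^sub>i\<^sub>1 \<cdots> T\<^sub>i\<^sub>k\<close>, empty word gives \<open>I\<close>.\<close>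

definition words :: "nat \<Rightarrow> nat list set" where
  "words n = lists {..<n}"

definition word_op :: "(nat \<Rightarrow> 'a \<Rightarrow> 'a) \<Rightarrow> nat list \<Rightarrow> 'a \<Rightarrow> 'a" where
  "word_op T \<alpha> = foldr (\<lambda>i f. T i \<circ> f) \<alpha> id"

definition phi_map :: "nat \<Rightarrow> (nat \<Rightarrow> 'a::chilbert_space \<Rightarrow> 'a) \<Rightarrow> ('a \<Rightarrow> 'a) \<Rightarrow> ('a \<Rightarrow> 'a)" where
  "phi_map n T X = (\<lambda>x. \<Sum>i<n. T i (X (cadjoint (T i) x)))"

definition M_space :: "nat \<Rightarrow> (nat \<Rightarrow> 'a::chilbert_space \<Rightarrow> 'a) \<Rightarrow> ('a \<Rightarrow> 'a) \<Rightarrow> nat \<Rightarrow> 'a set" where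
  "M_space n T D k = cspan {word_op T \<alpha> \<xi> | \<alpha> \<xi>. \<alpha> \<in> words n \<and> length \<alpha> \<le> k \<and>
       \<xi> \<in> range (op_sqrt (\<lambda>x. D x - phi_map n T D x))}"

text \<open>The full Fock space tensor \<open>\<H>\<close>, \<open>F\<^sup>2(H\<^sub>n) \<otimes> \<H>\<close>, is identified (via
  \<open>e\<^sub>\<alpha> \<otimes> h \<mapsto> \<delta>\<^sub>\<alpha> h\<close>) with the \<open>\<H>\<close>-valued square summable functions on \<open>\<bbbF>\<^sub>n\<^sup>+\<close>,
  with inner product \<open>\<langle>F,G\<rangle> = \<Sum>\<^sub>\<alpha> \<langle>F \<alpha>, G \<alpha>\<rangle>\<close>.  Then
  \<open>K\<^sub>\<phi>\<^sub>,\<^sub>D h = (\<alpha> \<mapsto> (D - \<phi>(D))\<^sup>1\<^sup>/\<^sup>2 T\<^sub>\<alpha>\<^sup>* h)\<close>, \<open>P\<^sub>\<le>\<^sub>k \<otimes> I\<close> is restriction to words of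
  length \<open>\<le> k\<close>, and \<open>K\<^sup>*\<close> is the Hilbert space adjoint of \<open>K\<close>.\<close>

definition poisson_K :: "nat \<Rightarrow> (nat \<Rightarrow> 'a::chilbert_space \<Rightarrow> 'a) \<Rightarrow> ('a \<Rightarrow> 'a) \<Rightarrow> 'a \<Rightarrow> (nat list \<Rightarrow> 'a)" where
  "poisson_K n T D h = (\<lambda>\<alpha>. if \<alpha> \<in> words n
      then op_sqrt (\<lambda>x. D x - phi_map n T D x) (cadjoint (word_op T \<alpha>) h) else 0)"

definition fock_proj :: "nat \<Rightarrow> (nat list \<Rightarrow> 'a::zero) \<Rightarrow> (nat list \<Rightarrow> 'a)" where
  "fock_proj k F = (\<lambda>\<alpha>. if length \<alpha> \<le> k then F \<alpha> else 0)"

definition poisson_K_adj :: "nat \<Rightarrow> (nat \<Rightarrow> 'a::chilbert_space \<Rightarrow> 'a) \<Rightarrow> ('a \<Rightarrow> 'a) \<Rightarrow> (nat list \<Rightarrow> 'a) \<Rightarrow> 'a" where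
  "poisson_K_adj n T D F = (THE y. \<forall>x. cinner x y =
      infsum (\<lambda>\<alpha>. cinner (poisson_K n T D x \<alpha>) (F \<alpha>)) (words n))"

end

theory Submission
  imports Defs "HOL-Computational_Algebra.Formal_Power_Series"
begin


global_interpretation cv: vector_space "scaleC :: complex \<Rightarrow> 'a \<Rightarrow> 'a::complex_vector"
  by unfold_locales (simp_all add: scaleC_add_right scaleC_add_left scaleC_scaleC scaleC_one)

lemma cspan_cv: "cspan S = cv.span S"
  by (simp add: cspan_def)

lemma cinner_add_right: "cinner x (y + z) = cinner x y + cinner x z"
  by (metis cinner_commute cinner_add_left complex_cnj_add)

lemma cinner_scaleC_right: "cinner x (r *\<^sub>C y) = r * cinner x y"
  by (metis cinner_commute cinner_scaleC_left complex_cnj_mult complex_cnj_cnj)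

lemma cinner_zero_left[simp]: "cinner 0 x = 0"
  using cinner_add_left[of 0 0 x] by simp

lemma cinner_zero_right[simp]: "cinner x 0 = 0"
  using cinner_add_right[of x 0 0] by simp

lemma cinner_minus_left: "cinner (- x) y = - cinner x y"
  using cinner_add_left[of x "-x" y] by (simp add: eq_neg_iff_add_eq_0 add.commute)

lemma cinner_minus_right: "cinner x (- y) = - cinner x y"
  using cinner_add_right[of x y "-y"] by (simp add: eq_neg_iff_add_eq_0 add.commute)

lemma cinner_diff_left: "cinner (x - y) z = cinner x z - cinner y z"
  using cinner_add_left[of x "-y" z] by (simp add: cinner_minus_left)

lemma cinner_diff_right: "cinner x (y - z) = cinner x y - cinner x z"
  using cinner_add_right[of x y "-z"] by (simp add: cinner_minus_right)

lemma cinner_sum_left: "cinner (\<Sum>i\<in>A. f i) y = (\<Sum>i\<in>A. cinner (f i) y)"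
  by (induction A rule: infinite_finite_induct) (simp_all add: cinner_add_left)

lemma cinner_sum_right: "cinner x (\<Sum>i\<in>A. f i) = (\<Sum>i\<in>A. cinner x (f i))"
  by (induction A rule: infinite_finite_induct) (simp_all add: cinner_add_right)

lemmas cinner_simps = cinner_add_left cinner_add_right cinner_diff_left cinner_diff_right
  cinner_scaleC_left cinner_scaleC_right cinner_minus_left cinner_minus_right

lemma cinner_self_Im: "Im (cinner x x) = 0"
  using cinner_self_real[of x] by (simp add: complex_is_Real_iff)

lemma cinner_self_norm: "cinner x x = complex_of_real ((norm x)\<^sup>2)"
proof -
  have "Re (cinner x x) = (norm x)\<^sup>2"
    using norm_eq_sqrt_cinner[of x] cinner_self_nonneg[of x] by simp
  then show ?thesis using cinner_self_Im[of x] by (simp add: complex_eq_iff)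
qed

lemma cinner_self_Re: "Re (cinner x x) = (norm x)\<^sup>2"
  by (simp add: cinner_self_norm)


lemma cinner_ext_right: "(\<And>z. cinner z x = cinner z y) \<Longrightarrow> x = y"
proof -
  assume h: "\<And>z. cinner z x = cinner z y"
  have "cinner (x - y) (x - y) = 0" by (simp add: cinner_diff_right h)
  then show "x = y" by (simp add: cinner_self_eq_zero)
qed

lemma cinner_ext_left: "(\<And>z. cinner x z = cinner y z) \<Longrightarrow> x = y"
proof -
  assume h: "\<And>z. cinner x z = cinner y z"
  have "cinner (x - y) (x - y) = 0" by (simp add: cinner_diff_left h)
  then show "x = y" by (simp add: cinner_self_eq_zero)
qed

lemma cinner_Re_commute: "Re (cinner x y) = Re (cinner y x)"
  by (subst cinner_commute) simp

lemma norm_add_sq: "(norm (x + y))\<^sup>2 = (norm x)\<^sup>2 + (norm y)\<^sup>2 + 2 * Re (cinner x y)"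
proof -
  have "(norm (x + y))\<^sup>2 = Re (cinner (x+y) (x+y))" by (simp add: cinner_self_Re)
  also have "\<dots> = Re (cinner x x) + Re (cinner y y) + Re (cinner x y) + Re (cinner y x)"
    by (simp add: cinner_add_left cinner_add_right)
  finally show ?thesis by (simp add: cinner_self_Re cinner_Re_commute[of y x])
qed

lemma norm_diff_sq: "(norm (x - y))\<^sup>2 = (norm x)\<^sup>2 + (norm y)\<^sup>2 - 2 * Re (cinner x y)"
  using norm_add_sq[of x "-y"] by (simp add: cinner_minus_right)

lemma norm_scaleC: "norm (c *\<^sub>C (x::'a::complex_inner)) = cmod c * norm x"
proof -
  have "cinner (c *\<^sub>C x) (c *\<^sub>C x) = (c * cnj c) * cinner x x"
    by (simp add: cinner_simps mult.commute)
  also have "\<dots> = complex_of_real ((cmod c * norm x)\<^sup>2)"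
    by (simp only: complex_norm_square[symmetric] cinner_self_norm of_real_mult power_mult_distrib)
  finally have "complex_of_real ((norm (c *\<^sub>C x))\<^sup>2) = complex_of_real ((cmod c * norm x)\<^sup>2)"
    by (simp only: cinner_self_norm)
  then have "(norm (c *\<^sub>C x))\<^sup>2 = (cmod c * norm x)\<^sup>2"
    by (simp only: of_real_eq_iff)
  then show ?thesis by (simp add: power2_eq_iff_nonneg)
qed


definition clin :: "('a::complex_vector \<Rightarrow> 'b::complex_vector) \<Rightarrow> bool" where
  "clin f \<longleftrightarrow> (\<forall>x y. f (x + y) = f x + f y) \<and> (\<forall>c x. f (c *\<^sub>C x) = c *\<^sub>C f x)"

definition posf :: "('a::complex_inner \<Rightarrow> 'a) \<Rightarrow> bool" where
  "posf A \<longleftrightarrow> (\<forall>x. Im (cinner x (A x)) = 0 \<and> 0 \<le> Re (cinner x (A x)))"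

lemma clin_add: "clin f \<Longrightarrow> f (x + y) = f x + f y"
  by (simp add: clin_def)

lemma clin_scale: "clin f \<Longrightarrow> f (c *\<^sub>C x) = c *\<^sub>C f x"
  by (simp add: clin_def)

lemma clin_module_hom: "clin f \<Longrightarrow> module_hom scaleC scaleC f"
  unfolding module_hom_def module_hom_axioms_def
  by (simp add: clin_def cv.module_axioms)

lemma clin_zero: "clin f \<Longrightarrow> f 0 = 0"
  using module_hom.zero[OF clin_module_hom] by blast

lemma clin_minus: "clin f \<Longrightarrow> f (- x) = - f x"
  using module_hom.neg[OF clin_module_hom] by blast

lemma clin_diff: "clin f \<Longrightarrow> f (x - y) = f x - f y"
  using module_hom.diff[OF clin_module_hom] by blast

lemma clin_sum: "clin f \<Longrightarrow> f (\<Sum>i\<in>A. g i) = (\<Sum>i\<in>A. f (g i))"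
  using module_hom.sum[OF clin_module_hom] by blast

lemma clin_scaleR: "clin f \<Longrightarrow> f (r *\<^sub>R x) = r *\<^sub>R f x"
  by (simp add: scaleR_scaleC clin_scale)

lemma clin_id: "clin (\<lambda>x. x)"
  by (simp add: clin_def)

lemma clin_comp: "clin f \<Longrightarrow> clin g \<Longrightarrow> clin (\<lambda>x. f (g x))"
  by (simp add: clin_def)

lemma clin_comp': "clin f \<Longrightarrow> clin g \<Longrightarrow> clin (f \<circ> g)"
  by (simp add: clin_def)

lemma clin_add_fun: "clin f \<Longrightarrow> clin g \<Longrightarrow> clin (\<lambda>x. f x + g x)"
  by (simp add: clin_def cv.scale_right_distrib algebra_simps)

lemma clin_diff_fun: "clin f \<Longrightarrow> clin g \<Longrightarrow> clin (\<lambda>x. f x - g x)"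
  by (simp add: clin_def cv.scale_right_diff_distrib algebra_simps)

lemma clin_sum_fun: "(\<And>i. i \<in> A \<Longrightarrow> clin (f i)) \<Longrightarrow> clin (\<lambda>x. \<Sum>i\<in>A. f i x)"
  by (simp add: clin_def sum.distrib cv.scale_sum_right)

lemma clin_scale_fun: "clin f \<Longrightarrow> clin (\<lambda>x. c *\<^sub>C f x)"
  by (simp add: clin_def cv.scale_right_distrib mult.commute)

lemma clin_const0: "clin (\<lambda>x. 0)"
  by (simp add: clin_def)

lemma bounded_clinear_clin: "bounded_clinear f \<Longrightarrow> clin f"
  by (simp add: bounded_clinear_def clin_def)

lemma bounded_clinear_bound: "bounded_clinear f \<Longrightarrow> \<exists>K. \<forall>x. norm (f x) \<le> norm x * K"
  by (simp add: bounded_clinear_def)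

lemma positive_op_iff: "positive_op A \<longleftrightarrow> bounded_clinear A \<and> posf A"
  by (simp add: positive_op_def posf_def complex_is_Real_iff)

lemma posfD: "posf A \<Longrightarrow> Im (cinner x (A x)) = 0"
  by (simp add: posf_def)

lemma posfD2: "posf A \<Longrightarrow> 0 \<le> Re (cinner x (A x))"
  by (simp add: posf_def)

lemma posf_real: "posf A \<Longrightarrow> cinner x (A x) = complex_of_real (Re (cinner x (A x)))"
  by (simp add: posf_def complex_eq_iff)

lemma herm:
  assumes "clin A" and q: "\<And>x. Im (cinner x (A x)) = 0"
  shows "cinner x (A y) = cnj (cinner y (A x))"
proof -
  define u where "u = cinner x (A y)"
  define v where "v = cinner y (A x)"
  have "cinner (x + y) (A (x + y)) = cinner x (A x) + cinner y (A y) + u + v"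
    using assms(1) by (simp add: clin_add cinner_simps u_def v_def)
  then have 1: "Im (u + v) = 0" using q[of "x+y"] q[of x] q[of y] by simp
  have "cinner (x + \<i> *\<^sub>C y) (A (x + \<i> *\<^sub>C y)) =
        cinner x (A x) + cinner y (A y) + \<i> * u - \<i> * v"
    using assms(1) by (simp add: clin_add clin_scale cinner_simps u_def v_def algebra_simps)
  then have 2: "Re (u - v) = 0" using q[of "x + \<i> *\<^sub>C y"] q[of x] q[of y] by simp
  from 1 2 show ?thesis unfolding u_def[symmetric] v_def[symmetric]
    by (simp add: complex_eq_iff)
qed

lemma posf_selfadj:
  assumes "clin A" "posf A"
  shows "cinner (A x) y = cinner x (A y)"
proof -
  have "cinner x (A y) = cnj (cinner y (A x))" using herm[OF assms(1) posfD[OF assms(2)]] .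
  also have "\<dots> = cinner (A x) y" by (simp add: cinner_commute[of y])
  finally show ?thesis by simp
qed

lemma real_quad_lemma:
  fixes p B q :: real
  assumes "\<And>s. 0 \<le> p - 2 * s * B + s\<^sup>2 * B * q" "0 \<le> B" "0 \<le> q"
  shows "B \<le> p * q"
proof (cases "q > 0")
  case True
  have "0 \<le> p - 2 * (1/q) * B + (1/q)\<^sup>2 * B * q" using assms(1) .
  also have "\<dots> = p - B / q" using True by (simp add: power2_eq_square field_simps)
  finally have "B / q \<le> p" by simp
  then show ?thesis using True by (simp add: field_simps mult.commute)
next
  case False
  then have q0: "q = 0" using assms(3) by simp
  show ?thesis
  proof (rule ccontr)
    assume "\<not> B \<le> p * q"
    then have Bp: "B > 0" using q0 by simp
    have "0 \<le> p - 2 * ((p + 1) / (2 * B)) * B" using assms(1)[of "(p+1)/(2*B)"] q0 by simp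
    also have "\<dots> = -1" using Bp by (simp add: field_simps)
    finally show False by simp
  qed
qed

lemma gen_cauchy_schwarz:
  assumes A: "clin A" "posf A"
  shows "(cmod (cinner x (A y)))\<^sup>2 \<le> Re (cinner x (A x)) * Re (cinner y (A y))"
proof -
  define b where "b = cinner x (A y)"
  define p where "p = Re (cinner x (A x))"
  define q where "q = Re (cinner y (A y))"
  have hy: "cinner y (A x) = cnj b" unfolding b_def using herm[OF A(1) posfD[OF A(2)], of y x] by simp
  have "0 \<le> p - 2 * s * (cmod b)\<^sup>2 + s\<^sup>2 * (cmod b)\<^sup>2 * q" for s :: real
  proof -
    define t where "t = - (complex_of_real s * cnj b)"
    have "cinner (x + t *\<^sub>C y) (A (x + t *\<^sub>C y)) =
       cinner x (A x) + t * b + cnj t * cnj b + cnj t * t * cinner y (A y)"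
      using A(1) by (simp add: clin_add clin_scale cinner_simps b_def[symmetric] hy algebra_simps)
    then have e0: "Re (cinner (x + t *\<^sub>C y) (A (x + t *\<^sub>C y))) =
       p + Re (t * b) + Re (cnj t * cnj b) + Re (cnj t * t * cinner y (A y))"
      by (simp add: p_def)
    have cb: "cmod b * cmod b = Re b * Re b + Im b * Im b"
      using cmod_power2[of b] by (simp add: power2_eq_square)
    have e1: "Re (t * b) = - s * (cmod b)\<^sup>2"
      by (simp add: t_def cb power2_eq_square algebra_simps)
    have e2: "Re (cnj t * cnj b) = - s * (cmod b)\<^sup>2"
      by (simp add: t_def cb power2_eq_square algebra_simps)
    have e3: "Re (cnj t * t * cinner y (A y)) = s\<^sup>2 * (cmod b)\<^sup>2 * q"
      apply (subst posf_real[OF A(2), of y])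
      by (simp add: t_def q_def cb power2_eq_square algebra_simps)
    have "Re (cinner (x + t *\<^sub>C y) (A (x + t *\<^sub>C y))) = p - 2 * s * (cmod b)\<^sup>2 + s\<^sup>2 * (cmod b)\<^sup>2 * q"
      unfolding e0 e1 e2 e3 by simp
    then show ?thesis using posfD2[OF A(2)] by metis
  qed
  from real_quad_lemma[OF this] show ?thesis
    using posfD2[OF A(2)] by (simp add: b_def p_def q_def)
qed

lemma posf_id: "posf (\<lambda>x. x)"
  by (simp add: posf_def cinner_self_Im cinner_self_nonneg)

lemma cauchy_schwarz: "cmod (cinner x y) \<le> norm x * norm y"
proof -
  have "(cmod (cinner x y))\<^sup>2 \<le> (norm x)\<^sup>2 * (norm y)\<^sup>2"
    using gen_cauchy_schwarz[OF clin_id posf_id, of x y] by (simp add: cinner_self_Re)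
  then have "(cmod (cinner x y))\<^sup>2 \<le> (norm x * norm y)\<^sup>2" by (simp add: power_mult_distrib)
  then show ?thesis by (simp add: power2_le_iff_abs_le)
qed

lemma posf_zero_imp:
  assumes "clin A" "posf A" "Re (cinner x (A x)) = 0"
  shows "A x = 0"
proof -
  have "(cmod (cinner y (A x)))\<^sup>2 \<le> 0" for y
    using gen_cauchy_schwarz[OF assms(1,2), of y x] assms(3) by simp
  then have "cinner y (A x) = 0" for y by simp
  then show ?thesis using cinner_self_eq_zero by blast
qed


lemma cmod_sq_expand: "cmod b * cmod b = Re b * Re b + Im b * Im b"
  using cmod_power2[of b] by (simp add: power2_eq_square)

lemma riesz:
  fixes f :: "'a::chilbert_space \<Rightarrow> complex"
  assumes fadd: "\<And>x y. f (x + y) = f x + f y"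
    and fscale: "\<And>c x. f (c *\<^sub>C x) = c * f x"
    and fbound: "\<And>x. cmod (f x) \<le> K * norm x"
  shows "\<exists>z. \<forall>x. f x = cinner z x"
proof (cases "\<forall>x. f x = 0")
  case True
  then show ?thesis by (intro exI[of _ 0]) simp
next
  case False
  then obtain x0 where fx0: "f x0 \<noteq> 0" by blast
  have f0: "f 0 = 0" using fadd[of 0 0] by simp
  have fdiff: "f (x - y) = f x - f y" for x y
    using fadd[of "x - y" y] by simp
  have fscaleR: "f (r *\<^sub>R x) = r * f x" for r x
    by (simp add: scaleR_scaleC fscale)
  define N where "N = {y. f y = 0}"
  define d2 where "d2 = Inf ((\<lambda>y. (norm (x0 - y))\<^sup>2) ` N)"
  have N0: "0 \<in> N" by (simp add: N_def f0)
  have bdd: "bdd_below ((\<lambda>y. (norm (x0 - y))\<^sup>2) ` N)"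
    by (rule bdd_belowI[of _ 0]) auto
  have d2_le: "d2 \<le> (norm (x0 - y))\<^sup>2" if "y \<in> N" for y
    unfolding d2_def by (rule cInf_lower) (use that bdd in auto)
  have "\<exists>y\<in>N. (norm (x0 - y))\<^sup>2 < d2 + inverse (real (Suc k))" for k
  proof -
    have "Inf ((\<lambda>y. (norm (x0 - y))\<^sup>2) ` N) < d2 + inverse (real (Suc k))"
      unfolding d2_def[symmetric] by simp
    from cInf_lessD[OF _ this] N0 show ?thesis by auto
  qed
  then obtain y where yN: "\<And>k. y k \<in> N"
    and yk: "\<And>k. (norm (x0 - y k))\<^sup>2 < d2 + inverse (real (Suc k))"
    by metis
  have par: "(norm (y m - y k))\<^sup>2 \<le> 2 * inverse (real (Suc m)) + 2 * inverse (real (Suc k))" for m k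
  proof -
    define a where "a = x0 - y m"
    define b where "b = x0 - y k"
    define mid where "mid = (1/2::real) *\<^sub>R (y m + y k)"
    have midN: "mid \<in> N" using yN[of m] yN[of k]
      by (simp add: N_def mid_def fscaleR fadd)
    have ab: "a + b = 2 *\<^sub>R (x0 - mid)"
      by (simp add: a_def b_def mid_def scaleR_right_diff_distrib scaleR_right_distrib scaleR_2 algebra_simps)
    have ab2: "a - b = y k - y m" by (simp add: a_def b_def)
    have "(norm (a + b))\<^sup>2 + (norm (a - b))\<^sup>2 = 2 * (norm a)\<^sup>2 + 2 * (norm b)\<^sup>2"
      using norm_add_sq[of a b] norm_diff_sq[of a b] by simp
    moreover have "(norm (a + b))\<^sup>2 = 4 * (norm (x0 - mid))\<^sup>2"
      by (simp add: ab power2_eq_square)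
    moreover have "d2 \<le> (norm (x0 - mid))\<^sup>2" using d2_le[OF midN] .
    moreover have "(norm a)\<^sup>2 < d2 + inverse (real (Suc m))" using yk[of m] by (simp add: a_def)
    moreover have "(norm b)\<^sup>2 < d2 + inverse (real (Suc k))" using yk[of k] by (simp add: b_def)
    moreover have "(norm (a - b))\<^sup>2 = (norm (y m - y k))\<^sup>2" by (simp add: ab2 norm_minus_commute)
    ultimately show ?thesis by linarith
  qed
  have "Cauchy y"
  proof (rule metric_CauchyI)
    fix e :: real assume e: "0 < e"
    obtain M where M: "inverse (real (Suc M)) < e\<^sup>2 / 4"
      using reals_Archimedean[of "e\<^sup>2 / 4"] e by auto
    show "\<exists>M. \<forall>m\<ge>M. \<forall>n\<ge>M. dist (y m) (y n) < e"
    proof (intro exI allI impI)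
      fix m n assume mn: "M \<le> m" "M \<le> n"
      have im: "inverse (real (Suc m)) \<le> inverse (real (Suc M))"
        using mn by (simp add: le_imp_inverse_le)
      have inn: "inverse (real (Suc n)) \<le> inverse (real (Suc M))"
        using mn by (simp add: le_imp_inverse_le)
      have "(norm (y m - y n))\<^sup>2 < e\<^sup>2"
        using par[of m n] im inn M by linarith
      then have "norm (y m - y n) < e" using e by (simp add: power_less_imp_less_base)
      then show "dist (y m) (y n) < e" by (simp add: dist_norm)
    qed
  qed
  then obtain yl where ylim: "y \<longlonglongrightarrow> yl" using Cauchy_convergent_iff convergent_def by blast
  have "cmod (f yl) \<le> 0"
  proof (rule LIMSEQ_le_const)
    have "(\<lambda>k. y k - yl) \<longlonglongrightarrow> 0" using ylim by (simp add: LIM_zero)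
    then have "(\<lambda>k. norm (y k - yl)) \<longlonglongrightarrow> 0" by (simp add: tendsto_norm_zero)
    then show "(\<lambda>k. K * norm (y k - yl)) \<longlonglongrightarrow> 0" by (simp add: tendsto_mult_right_zero)
    show "\<exists>N. \<forall>k\<ge>N. cmod (f yl) \<le> K * norm (y k - yl)"
    proof (intro exI allI impI)
      fix k
      have "f yl = - f (y k - yl)" using yN[of k] by (simp add: fdiff N_def)
      then have "cmod (f yl) = cmod (f (y k - yl))" by simp
      then show "cmod (f yl) \<le> K * norm (y k - yl)" using fbound by simp
    qed
  qed
  then have ylN: "yl \<in> N" by (simp add: N_def)
  have "(norm (x0 - yl))\<^sup>2 \<le> d2"
  proof (rule LIMSEQ_le)
    show "(\<lambda>k. (norm (x0 - y k))\<^sup>2) \<longlonglongrightarrow> (norm (x0 - yl))\<^sup>2"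
      by (intro tendsto_intros ylim)
    show "(\<lambda>k. d2 + inverse (real (Suc k))) \<longlonglongrightarrow> d2"
      using tendsto_add[OF tendsto_const LIMSEQ_inverse_real_of_nat, of d2] by simp
    show "\<exists>N. \<forall>k\<ge>N. (norm (x0 - y k))\<^sup>2 \<le> d2 + inverse (real (Suc k))"
      using yk less_imp_le by blast
  qed
  define z0 where "z0 = x0 - yl"
  have fz0: "f z0 = f x0" using ylN by (simp add: z0_def fdiff N_def)
  have z0min: "(norm z0)\<^sup>2 \<le> (norm (z0 - t *\<^sub>C v))\<^sup>2" if "v \<in> N" for v t
  proof -
    have "yl + t *\<^sub>C v \<in> N" using ylN that by (simp add: N_def fadd fscale)
    then have "d2 \<le> (norm (x0 - (yl + t *\<^sub>C v)))\<^sup>2" by (rule d2_le)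
    moreover have "x0 - (yl + t *\<^sub>C v) = z0 - t *\<^sub>C v" by (simp add: z0_def)
    ultimately have "d2 \<le> (norm (z0 - t *\<^sub>C v))\<^sup>2" by simp
    then show ?thesis using \<open>(norm (x0 - yl))\<^sup>2 \<le> d2\<close> unfolding z0_def by linarith
  qed
  have orth: "cinner z0 v = 0" if "v \<in> N" for v
  proof -
    define b where "b = cinner z0 v"
    define s where "s = inverse ((norm v)\<^sup>2 + 1)"
    have nv: "0 < (norm v)\<^sup>2 + 1" using zero_le_power2[of "norm v"] by linarith
    have s0: "0 < s" using nv by (simp add: s_def)
    have sv: "s * (norm v)\<^sup>2 \<le> 1" unfolding s_def using nv by (simp add: field_simps)
    define t where "t = complex_of_real s * cnj b"
    have "(norm (z0 - t *\<^sub>C v))\<^sup>2 = (norm z0)\<^sup>2 + (cmod t * norm v)\<^sup>2 - 2 * Re (cinner z0 (t *\<^sub>C v))"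
      by (simp add: norm_diff_sq norm_scaleC)
    also have "Re (cinner z0 (t *\<^sub>C v)) = s * (cmod b)\<^sup>2"
      by (simp add: cinner_scaleC_right t_def b_def[symmetric] cmod_sq_expand power2_eq_square algebra_simps)
    also have "(cmod t * norm v)\<^sup>2 = s * (s * (norm v)\<^sup>2) * (cmod b)\<^sup>2"
      using s0 by (simp add: t_def norm_mult power_mult_distrib power2_eq_square)
    finally have "(norm (z0 - t *\<^sub>C v))\<^sup>2 = (norm z0)\<^sup>2 + s * (s * (norm v)\<^sup>2) * (cmod b)\<^sup>2 - 2 * (s * (cmod b)\<^sup>2)" .
    with z0min[OF that, of t] have "0 \<le> s * (s * (norm v)\<^sup>2) * (cmod b)\<^sup>2 - 2 * (s * (cmod b)\<^sup>2)" by simp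
    moreover have "s * (s * (norm v)\<^sup>2) * (cmod b)\<^sup>2 \<le> s * 1 * (cmod b)\<^sup>2"
      using sv s0 by (intro mult_right_mono mult_left_mono) auto
    ultimately have "s * (cmod b)\<^sup>2 \<le> 0" by simp
    then have "(cmod b)\<^sup>2 \<le> 0" using s0 by (simp add: mult_le_0_iff)
    then show ?thesis by (simp add: b_def)
  qed
  have z0nz: "cinner z0 z0 \<noteq> 0" using fz0 fx0 f0 by (auto simp: cinner_self_eq_zero)
  define z where "z = cnj (f z0 / cinner z0 z0) *\<^sub>C z0"
  show ?thesis
  proof (intro exI allI)
    fix x
    define w where "w = x - (f x / f z0) *\<^sub>C z0"
    have "f w = 0" using fx0 fz0 by (simp add: w_def fdiff fscale)
    then have "cinner z0 w = 0" using orth by (simp add: N_def)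
    then have "cinner z0 x = (f x / f z0) * cinner z0 z0"
      by (simp add: w_def cinner_diff_right cinner_scaleC_right)
    then show "f x = cinner z x"
      using z0nz fx0 fz0 by (simp add: z_def cinner_scaleC_left field_simps)
  qed
qed

lemma adjoint_exists:
  assumes "bounded_clinear (T :: 'a::chilbert_space \<Rightarrow> 'a)"
  shows "\<exists>S. \<forall>x y. cinner (S x) y = cinner x (T y)"
proof -
  obtain K where K: "\<And>x. norm (T x) \<le> norm x * K" using bounded_clinear_bound[OF assms] by blast
  have T: "clin T" using bounded_clinear_clin[OF assms] .
  have "\<exists>z. \<forall>y. cinner x (T y) = cinner z y" for x
  proof (rule riesz[where K = "norm x * K"])
    show "cinner x (T (a + b)) = cinner x (T a) + cinner x (T b)" for a b
      by (simp add: clin_add[OF T] cinner_add_right)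
    show "cinner x (T (c *\<^sub>C a)) = c * cinner x (T a)" for c a
      by (simp add: clin_scale[OF T] cinner_scaleC_right)
    show "cmod (cinner x (T a)) \<le> norm x * K * norm a" for a
    proof -
      have "cmod (cinner x (T a)) \<le> norm x * norm (T a)" by (rule cauchy_schwarz)
      also have "\<dots> \<le> norm x * (norm a * K)" by (simp add: K mult_left_mono)
      finally show ?thesis by (simp add: mult.assoc mult.commute mult.left_commute)
    qed
  qed
  then obtain S where "\<And>x. \<forall>y. cinner x (T y) = cinner (S x) y" by metis
  then show ?thesis by metis
qed

lemma cadjoint_eqI:
  assumes "\<And>x y. cinner (S x) y = cinner x (T y)"
  shows "cadjoint T = S"
  unfolding cadjoint_def
proof (rule the_equality)
  show "\<forall>x y. cinner (S x) y = cinner x (T y)" using assms by blast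
  fix S' assume h: "\<forall>x y. cinner (S' x) y = cinner x (T y)"
  show "S' = S"
  proof
    fix x show "S' x = S x" by (rule cinner_ext_left) (simp add: h assms)
  qed
qed

lemma cadjoint:
  assumes "bounded_clinear T"
  shows "cinner (cadjoint T x) y = cinner x (T y)"
proof -
  obtain S where S: "\<forall>x y. cinner (S x) y = cinner x (T y)" using adjoint_exists[OF assms] by blast
  then have "cadjoint T = S" by (intro cadjoint_eqI) blast
  then show ?thesis using S by simp
qed

lemma cadjoint_right:
  assumes "bounded_clinear T"
  shows "cinner x (cadjoint T y) = cinner (T x) y"
proof -
  have "cinner x (cadjoint T y) = cnj (cinner (cadjoint T y) x)" by (simp add: cinner_commute[of x])
  also have "\<dots> = cnj (cinner y (T x))" by (simp add: cadjoint[OF assms])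
  also have "\<dots> = cinner (T x) y" by (simp add: cinner_commute[of y])
  finally show ?thesis .
qed

lemma clin_by_adjoint:
  assumes "\<And>x y. cinner (S x) y = cinner x (T y)"
  shows "clin S"
  unfolding clin_def
proof (intro conjI allI)
  fix x y show "S (x + y) = S x + S y"
    by (rule cinner_ext_left) (simp add: assms cinner_add_left)
next
  fix c x show "S (c *\<^sub>C x) = c *\<^sub>C S x"
    by (rule cinner_ext_left) (simp add: assms cinner_scaleC_left)
qed

lemma cadjoint_clin:
  assumes "bounded_clinear T"
  shows "clin (cadjoint T)"
  by (rule clin_by_adjoint[of _ T]) (simp add: cadjoint[OF assms])


instance chilbert_space \<subseteq> banach ..

definition sq_coef :: "nat \<Rightarrow> real" where
  "sq_coef k = ((1/2::real) gchoose k) * (-1)^k"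

lemma gchoose_Suc_rec: "(a::real) gchoose (Suc k) = (a gchoose k) * (a - of_nat k) / of_nat (Suc k)"
proof -
  have "fact (Suc k) * (a gchoose Suc k) = (\<Prod>i = 0..<Suc k. a - of_nat i)" by (rule gbinomial_mult_fact)
  also have "\<dots> = (\<Prod>i=0..<k. a - of_nat i) * (a - of_nat k)" by simp
  also have "\<dots> = fact k * (a gchoose k) * (a - of_nat k)" by (simp add: gbinomial_mult_fact)
  finally have "of_nat (Suc k) * fact k * (a gchoose Suc k) = fact k * (a gchoose k) * (a - of_nat k)"
    by (simp add: fact_Suc)
  then have "fact k * (of_nat (Suc k) * (a gchoose Suc k)) = fact k * ((a gchoose k) * (a - of_nat k))"
    by (simp only: mult_ac)
  then have "of_nat (Suc k) * (a gchoose Suc k) = (a gchoose k) * (a - of_nat k)"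
    by (simp only: mult_cancel_left fact_nonzero simp_thms)
  then show ?thesis by (simp only: eq_divide_eq of_nat_Suc mult.commute) simp
qed

lemma sq_coef_0[simp]: "sq_coef 0 = 1"
  by (simp add: sq_coef_def)

lemma sq_coef_Suc: "sq_coef (Suc k) = sq_coef k * (of_nat k - 1/2) / of_nat (Suc k)"
  unfolding sq_coef_def gchoose_Suc_rec by (simp add: field_simps del: of_nat_Suc)

lemma sq_coef_nonpos: "sq_coef (Suc k) \<le> 0"
proof (induction k)
  case 0 then show ?case by (simp add: sq_coef_Suc)
next
  case (Suc k)
  have "0 \<le> (of_nat (Suc k) - 1/2 :: real) / of_nat (Suc (Suc k))" by simp
  then have "sq_coef (Suc k) * ((of_nat (Suc k) - 1/2) / of_nat (Suc (Suc k))) \<le> 0"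
    using Suc by (intro mult_nonpos_nonneg)
  then show ?case unfolding sq_coef_Suc[of "Suc k"] by simp
qed

lemma sq_coef_psum: "0 \<le> (\<Sum>k\<le>N. sq_coef k)"
proof -
  have "(\<Sum>k\<le>N. sq_coef k) = (-1)^N * ((1/2 - 1) gchoose N)"
    unfolding sq_coef_def by (rule gbinomial_sum_lower_neg)
  also have "0 \<le> (-1::real)^N * ((1/2 - 1) gchoose N)"
  proof (induction N)
    case 0 then show ?case by simp
  next
    case (Suc N)
    have "(-1::real)^(Suc N) * ((1/2 - 1) gchoose Suc N) =
          ((-1)^N * ((1/2 - 1) gchoose N)) * ((of_nat N + 1/2) / of_nat (Suc N))"
      unfolding gchoose_Suc_rec by (simp add: field_simps del: of_nat_Suc)
    also have "0 \<le> \<dots>" by (rule mult_nonneg_nonneg[OF Suc.IH]) simp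
    finally show ?case .
  qed
  finally show ?thesis .
qed

lemma sq_coef_conv:
  "(\<Sum>i\<le>m. sq_coef i * sq_coef (m - i)) = (if m = 0 then 1 else if m = 1 then -1 else 0)"
proof -
  have "(\<Sum>i\<le>m. sq_coef i * sq_coef (m - i)) =
        (\<Sum>i\<in>{0..m}. (-1)^m * (((1/2::real) gchoose i) * ((1/2) gchoose (m - i))))"
    unfolding atMost_atLeast0
  proof (rule sum.cong)
    fix i assume "i \<in> {0..m}"
    then have e: "(-1::real)^i * (-1)^(m-i) = (-1)^m" by (simp add: power_add[symmetric])
    have "sq_coef i * sq_coef (m - i) = (((1/2::real) gchoose i) * ((1/2) gchoose (m - i))) * ((-1)^i * (-1)^(m-i))"
      unfolding sq_coef_def by (simp only: mult_ac)
    also have "\<dots> = (-1)^m * (((1/2::real) gchoose i) * ((1/2) gchoose (m - i)))"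
      by (simp only: e mult.commute)
    finally show "sq_coef i * sq_coef (m - i) = (-1)^m * (((1/2::real) gchoose i) * ((1/2) gchoose (m - i)))" .
  qed simp
  also have "\<dots> = (-1)^m * (\<Sum>i\<in>{0..m}. ((1/2::real) gchoose i) * ((1/2) gchoose (m - i)))"
    by (simp only: sum_distrib_left)
  also have "\<dots> = (-1)^m * ((1::real) gchoose m)"
    using gbinomial_Vandermonde[of "1/2::real" "1/2" m] by simp
  also have "((1::real) gchoose m) = of_nat (1 choose m)"
    using binomial_gbinomial[of 1 m, where 'a = real] by simp
  finally have *: "(\<Sum>i\<le>m. sq_coef i * sq_coef (m - i)) = (-1)^m * of_nat (1 choose m)" .
  show ?thesis
  proof (cases m)
    case 0 then show ?thesis using * by simp
  next
    case (Suc m')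
    show ?thesis
    proof (cases m')
      case 0 then show ?thesis using * Suc by simp
    next
      case (Suc m'')
      then have "1 choose m = 0" using \<open>m = Suc m'\<close> by (simp add: binomial_eq_0)
      then show ?thesis using * \<open>m = Suc m'\<close> Suc by simp
    qed
  qed
qed

lemma sq_coef_abs_sum: "(\<Sum>k\<le>N. \<bar>sq_coef k\<bar>) + (\<Sum>k\<le>N. sq_coef k) = 2"
proof (induction N)
  case 0 then show ?case by simp
next
  case (Suc N)
  have "\<bar>sq_coef (Suc N)\<bar> + sq_coef (Suc N) = 0" using sq_coef_nonpos[of N] by simp
  with Suc show ?case by simp
qed

lemma sq_coef_abs_bound: "(\<Sum>k<n. \<bar>sq_coef k\<bar>) \<le> 2"
proof (cases n)
  case 0 then show ?thesis by simp
next
  case (Suc N)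
  then have "{..<n} = {..N}" by auto
  then show ?thesis using sq_coef_abs_sum[of N] sq_coef_psum[of N] by simp
qed

lemma sq_coef_summable: "summable (\<lambda>k. \<bar>sq_coef k\<bar>)"
  by (rule summableI_nonneg_bounded[where x = 2]) (auto simp: sq_coef_abs_bound)

lemma square_to_triangle:
  fixes w :: "nat \<Rightarrow> nat \<Rightarrow> 'a::real_normed_vector" and f :: "nat \<Rightarrow> nat \<Rightarrow> real"
  assumes wf: "\<And>i j. norm (w i j) \<le> f i j" and f0: "\<And>i j. 0 \<le> f i j"
    and fc: "convergent (\<lambda>n. \<Sum>(i,j)\<in>{..<n}\<times>{..<n}. f i j)"
    and wl: "(\<lambda>n. \<Sum>(i,j)\<in>{..<n}\<times>{..<n}. w i j) \<longlonglongrightarrow> L"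
  shows "(\<lambda>n. \<Sum>(i,j)\<in>{(i,j). i+j<n}. w i j) \<longlonglongrightarrow> L"
proof -
  let ?S1 = "\<lambda>n::nat. {..<n} \<times> {..<n}"
  let ?S2 = "\<lambda>n::nat. {(i,j). i + j < n}"
  have S1_mono: "\<And>m n. m \<le> n \<Longrightarrow> ?S1 m \<subseteq> ?S1 n" by auto
  have S2_le_S1: "\<And>n. ?S2 n \<subseteq> ?S1 n" by auto
  have S1_le_S2: "\<And>n. ?S1 (n div 2) \<subseteq> ?S2 n" by auto
  have finite_S1: "\<And>n. finite (?S1 n)" by simp
  with S2_le_S1 have finite_S2: "\<And>n. finite (?S2 n)" by (rule finite_subset)
  let ?g = "\<lambda>(i,j). w i j"
  let ?f = "\<lambda>(i,j). f i j"
  have f_nonneg: "\<And>x. 0 \<le> ?f x" using f0 by auto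
  then have norm_sum_f: "\<And>A. norm (sum ?f A) = sum ?f A"
    unfolding real_norm_def
    by (simp only: abs_of_nonneg sum_nonneg [rule_format])
  have Cauchy: "Cauchy (\<lambda>n. sum ?f (?S1 n))"
    using fc by (rule convergent_Cauchy)
  have "Zfun (\<lambda>n. sum ?f (?S1 n - ?S2 n)) sequentially"
  proof (rule ZfunI, simp only: eventually_sequentially norm_sum_f)
    fix r :: real
    assume r: "0 < r"
    from CauchyD [OF Cauchy r] obtain N
      where "\<forall>m\<ge>N. \<forall>n\<ge>N. norm (sum ?f (?S1 m) - sum ?f (?S1 n)) < r" ..
    then have "\<And>m n. N \<le> n \<Longrightarrow> n \<le> m \<Longrightarrow> norm (sum ?f (?S1 m - ?S1 n)) < r"
      by (simp only: sum_diff finite_S1 S1_mono)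
    then have N: "\<And>m n. N \<le> n \<Longrightarrow> n \<le> m \<Longrightarrow> sum ?f (?S1 m - ?S1 n) < r"
      by (simp only: norm_sum_f)
    show "\<exists>N. \<forall>n\<ge>N. sum ?f (?S1 n - ?S2 n) < r"
    proof (intro exI allI impI)
      fix n
      assume "2 * N \<le> n"
      then have n: "N \<le> n div 2" by simp
      have "sum ?f (?S1 n - ?S2 n) \<le> sum ?f (?S1 n - ?S1 (n div 2))"
        by (intro sum_mono2 finite_Diff finite_S1 f_nonneg Diff_mono subset_refl S1_le_S2)
      also have "\<dots> < r"
        using n div_le_dividend by (rule N)
      finally show "sum ?f (?S1 n - ?S2 n) < r" .
    qed
  qed
  then have "Zfun (\<lambda>n. sum ?g (?S1 n - ?S2 n)) sequentially"
  proof (rule Zfun_le)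
    show "\<forall>n. norm (sum ?g (?S1 n - ?S2 n)) \<le> norm (sum ?f (?S1 n - ?S2 n))"
    proof
      fix n
      have "norm (sum ?g (?S1 n - ?S2 n)) \<le> sum (\<lambda>x. norm (?g x)) (?S1 n - ?S2 n)"
        by (rule norm_sum)
      also have "\<dots> \<le> sum ?f (?S1 n - ?S2 n)"
        by (rule sum_mono) (auto simp: wf)
      finally show "norm (sum ?g (?S1 n - ?S2 n)) \<le> norm (sum ?f (?S1 n - ?S2 n))"
        by (simp only: norm_sum_f)
    qed
  qed
  then have 2: "(\<lambda>n. sum ?g (?S1 n) - sum ?g (?S2 n)) \<longlonglongrightarrow> 0"
    unfolding tendsto_Zfun_iff diff_0_right
    by (simp only: sum_diff finite_S1 S2_le_S1)
  with wl show ?thesis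
    by (rule Lim_transform2)
qed

lemma bounded_linear_scaleC: "bounded_linear (\<lambda>x::'a::complex_inner. c *\<^sub>C x)"
proof (rule bounded_linear_intro[where K = "cmod c"])
  show "c *\<^sub>C (x + y) = c *\<^sub>C x + c *\<^sub>C y" for x y :: 'a by (rule scaleC_add_right)
  show "c *\<^sub>C (r *\<^sub>R x) = r *\<^sub>R (c *\<^sub>C x)" for r and x :: 'a
    by (simp add: scaleR_scaleC scaleC_scaleC mult.commute)
  show "norm (c *\<^sub>C x) \<le> norm x * cmod c" for x :: 'a by (simp add: norm_scaleC mult.commute)
qed

lemma bounded_clinear_bounded_linear: "bounded_clinear f \<Longrightarrow> bounded_linear f"
proof -
  assume f: "bounded_clinear f"
  then obtain K where K: "\<And>x. norm (f x) \<le> norm x * K" using bounded_clinear_bound by blast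
  show "bounded_linear f"
    by (rule bounded_linear_intro[where K = K])
       (simp_all add: clin_add[OF bounded_clinear_clin[OF f]] clin_scaleR[OF bounded_clinear_clin[OF f]] K)
qed

lemma bounded_linear_cinner_right: "bounded_linear (\<lambda>y. cinner x y)"
proof (rule bounded_linear_intro[where K = "norm x"])
  show "cinner x (y + z) = cinner x y + cinner x z" for y z by (rule cinner_add_right)
  show "cinner x (r *\<^sub>R y) = r *\<^sub>R cinner x y" for r y
  proof -
    have "r *\<^sub>R y = complex_of_real r *\<^sub>C y" by (rule scaleR_scaleC)
    then have "cinner x (r *\<^sub>R y) = complex_of_real r * cinner x y" by (simp only: cinner_scaleC_right)
    also have "\<dots> = r *\<^sub>R cinner x y" by (simp only: scaleR_conv_of_real)
    finally show ?thesis .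
  qed
  show "norm (cinner x y) \<le> norm y * norm x" for y
    using cauchy_schwarz[of x y] by (simp add: mult.commute)
qed


lemma clin_bounded_linear:
  assumes "clin f" "\<And>x. norm (f x) \<le> norm x * K"
  shows "bounded_linear f"
  by (rule bounded_linear_intro[where K = K]) (simp_all add: clin_add[OF assms(1)] clin_scaleR[OF assms(1)] assms(2))

lemma scaleC_scaleR_commute: "c *\<^sub>C (r *\<^sub>R (v::'a::complex_vector)) = r *\<^sub>R (c *\<^sub>C v)"
  by (simp add: scaleR_scaleC scaleC_scaleC mult.commute)

lemma cinner_scaleR_right: "cinner x (r *\<^sub>R y) = complex_of_real r * cinner x y"
  by (simp add: scaleR_scaleC[of r y] cinner_scaleC_right)

lemma cinner_scaleR_left: "cinner (r *\<^sub>R x) y = complex_of_real r * cinner x y"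
  by (simp add: scaleR_scaleC[of r x] cinner_scaleC_left)

definition Bop :: "('a::chilbert_space \<Rightarrow> 'a) \<Rightarrow> real \<Rightarrow> 'a \<Rightarrow> 'a" where
  "Bop A lam x = x - (1/lam) *\<^sub>R A x"

definition Uop :: "('a::chilbert_space \<Rightarrow> 'a) \<Rightarrow> real \<Rightarrow> 'a \<Rightarrow> 'a" where
  "Uop A lam x = (\<Sum>k. sq_coef k *\<^sub>R (Bop A lam ^^ k) x)"

definition Sop :: "('a::chilbert_space \<Rightarrow> 'a) \<Rightarrow> real \<Rightarrow> 'a \<Rightarrow> 'a" where
  "Sop A lam x = sqrt lam *\<^sub>R Uop A lam x"

definition sqC :: real where "sqC = (\<Sum>k. \<bar>sq_coef k\<bar>)"

locale sqctx =
  fixes A :: "'a::chilbert_space \<Rightarrow> 'a" and lam :: real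
  assumes Apos: "positive_op A" and lam_pos: "0 < lam"
    and lam_bound: "\<And>x. norm (A x) \<le> lam * norm x"
begin

lemma A_clin: "clin A" using Apos by (simp add: positive_op_iff bounded_clinear_clin)
lemma A_posf: "posf A" using Apos by (simp add: positive_op_iff)

lemma B_clin: "clin (Bop A lam)"
proof -
  have "clin (\<lambda>x. complex_of_real (1/lam) *\<^sub>C A x)" by (rule clin_scale_fun[OF A_clin])
  then have "clin (\<lambda>x. x - complex_of_real (1/lam) *\<^sub>C A x)" by (rule clin_diff_fun[OF clin_id])
  then show ?thesis unfolding Bop_def by (simp add: scaleR_scaleC)
qed

lemma B_inner: "cinner x (Bop A lam x) = cinner x x - complex_of_real (1/lam) * cinner x (A x)"
  by (simp add: Bop_def cinner_diff_right cinner_scaleR_right)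

lemma A_inner_le: "Re (cinner x (A x)) \<le> lam * (norm x)\<^sup>2"
proof -
  have "Re (cinner x (A x)) \<le> cmod (cinner x (A x))" by (rule complex_Re_le_cmod)
  also have "\<dots> \<le> norm x * norm (A x)" by (rule cauchy_schwarz)
  also have "\<dots> \<le> norm x * (lam * norm x)" by (simp add: lam_bound mult_left_mono)
  finally show ?thesis by (simp add: power2_eq_square mult_ac)
qed

lemma B_posf: "posf (Bop A lam)"
  unfolding posf_def
proof
  fix x
  have "Im (cinner x (Bop A lam x)) = 0"
    using posfD[OF A_posf, of x] by (simp add: B_inner cinner_self_Im)
  moreover have "0 \<le> Re (cinner x (Bop A lam x))"
  proof -
    have "Re (cinner x (Bop A lam x)) = (norm x)\<^sup>2 - (1/lam) * Re (cinner x (A x))"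
      using posfD[OF A_posf, of x] by (simp add: B_inner cinner_self_Re)
    moreover have "(1/lam) * Re (cinner x (A x)) \<le> (norm x)\<^sup>2"
      using A_inner_le[of x] lam_pos by (simp add: field_simps)
    ultimately show ?thesis by simp
  qed
  ultimately show "Im (cinner x (Bop A lam x)) = 0 \<and> 0 \<le> Re (cinner x (Bop A lam x))" by simp
qed

lemma B_le: "Re (cinner x (Bop A lam x)) \<le> (norm x)\<^sup>2"
proof -
  have "Re (cinner x (Bop A lam x)) = (norm x)\<^sup>2 - (1/lam) * Re (cinner x (A x))"
    using posfD[OF A_posf, of x] by (simp add: B_inner cinner_self_Re)
  moreover have "0 \<le> (1/lam) * Re (cinner x (A x))"
    using posfD2[OF A_posf, of x] lam_pos by simp
  ultimately show ?thesis by simp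
qed

lemma B_norm: "norm (Bop A lam x) \<le> norm x"
proof -
  let ?B = "Bop A lam"
  have "(cmod (cinner x (?B (?B x))))\<^sup>2 \<le> Re (cinner x (?B x)) * Re (cinner (?B x) (?B (?B x)))"
    by (rule gen_cauchy_schwarz[OF B_clin B_posf])
  also have "\<dots> \<le> (norm x)\<^sup>2 * (norm (?B x))\<^sup>2"
    using B_le[of x] B_le[of "?B x"] posfD2[OF B_posf, of x] posfD2[OF B_posf, of "?B x"]
    by (intro mult_mono) auto
  also have "cinner x (?B (?B x)) = cinner (?B x) (?B x)"
    by (rule posf_selfadj[OF B_clin B_posf, symmetric])
  finally have "(cmod (complex_of_real ((norm (?B x))\<^sup>2)))\<^sup>2 \<le> (norm x)\<^sup>2 * (norm (?B x))\<^sup>2"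
    by (simp only: cinner_self_norm)
  then have "((norm (?B x))\<^sup>2)\<^sup>2 \<le> (norm x)\<^sup>2 * (norm (?B x))\<^sup>2"
    by (simp only: norm_of_real abs_of_nonneg zero_le_power2)
  then have h: "(norm (?B x))\<^sup>2 * (norm (?B x))\<^sup>2 \<le> (norm x)\<^sup>2 * (norm (?B x))\<^sup>2"
    by (simp only: power2_eq_square[of "(norm (?B x))\<^sup>2"])
  show ?thesis
  proof (cases "norm (?B x) = 0")
    case True then show ?thesis by simp
  next
    case False
    then have "0 < (norm (?B x))\<^sup>2" by simp
    then have "(norm (?B x))\<^sup>2 \<le> (norm x)\<^sup>2" by (rule mult_right_le_imp_le[OF h])
    then show ?thesis by (rule power2_le_imp_le) simp
  qed
qed

lemma Bk_clin: "clin (Bop A lam ^^ k)"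
  by (induction k) (simp_all add: clin_id clin_comp[OF B_clin])

lemma Bk_norm: "norm ((Bop A lam ^^ k) x) \<le> norm x"
proof (induction k)
  case 0 then show ?case by simp
next
  case (Suc k)
  have "norm ((Bop A lam ^^ Suc k) x) = norm (Bop A lam ((Bop A lam ^^ k) x))" by simp
  also have "\<dots> \<le> norm ((Bop A lam ^^ k) x)" by (rule B_norm)
  finally show ?case using Suc by simp
qed

lemma Bk_selfadj: "cinner ((Bop A lam ^^ k) x) y = cinner x ((Bop A lam ^^ k) y)"
proof (induction k arbitrary: x y)
  case 0 then show ?case by simp
next
  case (Suc k)
  have "cinner ((Bop A lam ^^ Suc k) x) y = cinner (Bop A lam ((Bop A lam ^^ k) x)) y" by simp
  also have "\<dots> = cinner ((Bop A lam ^^ k) x) (Bop A lam y)" by (rule posf_selfadj[OF B_clin B_posf])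
  also have "\<dots> = cinner x ((Bop A lam ^^ k) (Bop A lam y))" by (rule Suc)
  also have "\<dots> = cinner x ((Bop A lam ^^ Suc k) y)" by (simp add: funpow_swap1)
  finally show ?case .
qed

lemma Bk_Im: "Im (cinner x ((Bop A lam ^^ k) x)) = 0"
proof -
  have "cinner x ((Bop A lam ^^ k) x) = cinner ((Bop A lam ^^ k) x) x" by (rule Bk_selfadj[symmetric])
  also have "\<dots> = cnj (cinner x ((Bop A lam ^^ k) x))" by (rule cinner_commute)
  finally show ?thesis by (simp add: complex_eq_iff)
qed

lemma Bk_Re_nonneg: "0 \<le> Re (cinner x ((Bop A lam ^^ k) x))"
proof -
  let ?B = "Bop A lam"
  define m where "m = k div 2"
  have "k = m + m \<or> k = Suc (m + m)" unfolding m_def by presburger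
  then show ?thesis
  proof
    assume k: "k = m + m"
    have "cinner x ((?B ^^ k) x) = cinner x ((?B ^^ m) ((?B ^^ m) x))" by (simp add: k funpow_add)
    also have "\<dots> = cinner ((?B ^^ m) x) ((?B ^^ m) x)" by (rule Bk_selfadj[symmetric])
    finally show ?thesis by (simp add: cinner_self_nonneg)
  next
    assume k: "k = Suc (m + m)"
    have "cinner x ((?B ^^ k) x) = cinner x ((?B ^^ m) (?B ((?B ^^ m) x)))" by (simp add: k funpow_add funpow_swap1)
    also have "\<dots> = cinner ((?B ^^ m) x) (?B ((?B ^^ m) x))" by (rule Bk_selfadj[symmetric])
    finally show ?thesis using posfD2[OF B_posf] by simp
  qed
qed

lemma Bk_Re_le: "Re (cinner x ((Bop A lam ^^ k) x)) \<le> (norm x)\<^sup>2"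
proof -
  have "Re (cinner x ((Bop A lam ^^ k) x)) \<le> cmod (cinner x ((Bop A lam ^^ k) x))" by (rule complex_Re_le_cmod)
  also have "\<dots> \<le> norm x * norm ((Bop A lam ^^ k) x)" by (rule cauchy_schwarz)
  also have "\<dots> \<le> norm x * norm x" by (simp add: Bk_norm mult_left_mono)
  finally show ?thesis by (simp add: power2_eq_square)
qed

lemma Bk_bl: "bounded_linear (Bop A lam ^^ k)"
  by (rule clin_bounded_linear[OF Bk_clin, where K = 1]) (simp add: Bk_norm)

lemma U_term_norm: "norm (sq_coef k *\<^sub>R (Bop A lam ^^ k) x) \<le> \<bar>sq_coef k\<bar> * norm x"
  by (simp add: Bk_norm mult_left_mono)

lemma U_summable_norm: "summable (\<lambda>k. norm (sq_coef k *\<^sub>R (Bop A lam ^^ k) x))"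
  by (rule summable_comparison_test[OF _ summable_mult2[OF sq_coef_summable, of "norm x"]])
     (auto intro!: mult_left_mono simp: Bk_norm)

lemma U_summable: "summable (\<lambda>k. sq_coef k *\<^sub>R (Bop A lam ^^ k) x)"
  by (rule summable_norm_cancel[OF U_summable_norm])

lemma U_norm: "norm (Uop A lam x) \<le> sqC * norm x"
proof -
  have "norm (Uop A lam x) \<le> (\<Sum>k. norm (sq_coef k *\<^sub>R (Bop A lam ^^ k) x))"
    unfolding Uop_def by (rule summable_norm[OF U_summable_norm])
  also have "\<dots> \<le> (\<Sum>k. \<bar>sq_coef k\<bar> * norm x)"
    by (rule suminf_le[OF U_term_norm U_summable_norm summable_mult2[OF sq_coef_summable]])
  also have "\<dots> = sqC * norm x" unfolding sqC_def by (rule suminf_mult2[symmetric, OF sq_coef_summable])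
  finally show ?thesis .
qed

lemma U_clin: "clin (Uop A lam)"
  unfolding clin_def
proof (intro conjI allI)
  fix x y
  have "Uop A lam x + Uop A lam y = (\<Sum>k. sq_coef k *\<^sub>R (Bop A lam ^^ k) x + sq_coef k *\<^sub>R (Bop A lam ^^ k) y)"
    unfolding Uop_def by (rule suminf_add[OF U_summable U_summable])
  also have "\<dots> = Uop A lam (x + y)"
    unfolding Uop_def by (simp add: clin_add[OF Bk_clin] scaleR_right_distrib)
  finally show "Uop A lam (x + y) = Uop A lam x + Uop A lam y" by simp
next
  fix c x
  have "c *\<^sub>C Uop A lam x = (\<Sum>k. c *\<^sub>C (sq_coef k *\<^sub>R (Bop A lam ^^ k) x))"
    unfolding Uop_def by (rule bounded_linear.suminf[OF bounded_linear_scaleC U_summable])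
  also have "\<dots> = Uop A lam (c *\<^sub>C x)"
    unfolding Uop_def by (simp add: clin_scale[OF Bk_clin] scaleC_scaleR_commute)
  finally show "Uop A lam (c *\<^sub>C x) = c *\<^sub>C Uop A lam x" by simp
qed

lemma U_commute:
  assumes R: "bounded_clinear R" and RA: "\<And>x. R (A x) = A (R x)"
  shows "R (Uop A lam x) = Uop A lam (R x)"
proof -
  have RB: "R (Bop A lam x) = Bop A lam (R x)" for x
    by (simp add: Bop_def clin_diff[OF bounded_clinear_clin[OF R]] clin_scaleR[OF bounded_clinear_clin[OF R]] RA)
  have RBk: "R ((Bop A lam ^^ k) x) = (Bop A lam ^^ k) (R x)" for k x
    by (induction k) (simp_all add: RB)
  have "R (Uop A lam x) = (\<Sum>k. R (sq_coef k *\<^sub>R (Bop A lam ^^ k) x))"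
    unfolding Uop_def by (rule bounded_linear.suminf[OF bounded_clinear_bounded_linear[OF R] U_summable])
  also have "\<dots> = Uop A lam (R x)"
    unfolding Uop_def by (simp add: clin_scaleR[OF bounded_clinear_clin[OF R]] RBk)
  finally show ?thesis .
qed

end


context sqctx begin

definition Upart :: "nat \<Rightarrow> 'a \<Rightarrow> 'a" where
  "Upart n y = (\<Sum>i<n. sq_coef i *\<^sub>R (Bop A lam ^^ i) y)"

lemma Upart_diff: "Upart n (a - b) = Upart n a - Upart n b"
  by (simp add: Upart_def clin_diff[OF Bk_clin] scaleR_diff_right sum_subtractf)

lemma Upart_norm: "norm (Upart n y) \<le> sqC * norm y"
proof -
  have "norm (Upart n y) \<le> (\<Sum>i<n. norm (sq_coef i *\<^sub>R (Bop A lam ^^ i) y))"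
    unfolding Upart_def by (rule norm_sum)
  also have "\<dots> \<le> (\<Sum>i<n. \<bar>sq_coef i\<bar> * norm y)"
    by (rule sum_mono) (rule U_term_norm)
  also have "\<dots> = (\<Sum>i<n. \<bar>sq_coef i\<bar>) * norm y" by (simp add: sum_distrib_right)
  also have "\<dots> \<le> sqC * norm y"
    unfolding sqC_def by (intro mult_right_mono sum_le_suminf[OF sq_coef_summable]) auto
  finally show ?thesis .
qed

lemma Upart_lim: "(\<lambda>n. Upart n y) \<longlonglongrightarrow> Uop A lam y"
  unfolding Upart_def Uop_def by (rule summable_LIMSEQ[OF U_summable])

lemma UU: "Uop A lam (Uop A lam x) = x - Bop A lam x"
proof -
  define v where "v m = (Bop A lam ^^ m) x" for m
  define w where "w i j = (sq_coef i * sq_coef j) *\<^sub>R v (i + j)" for i j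
  define f where "f i j = \<bar>sq_coef i\<bar> * \<bar>sq_coef j\<bar> * norm x" for i j
  have wf: "norm (w i j) \<le> f i j" for i j
    unfolding w_def f_def v_def
    by (simp add: abs_mult Bk_norm mult_left_mono)
  have f0: "0 \<le> f i j" for i j by (simp add: f_def)
  have fsum: "(\<Sum>(i,j)\<in>{..<n}\<times>{..<n}. f i j) = (\<Sum>i<n. \<bar>sq_coef i\<bar>) * (\<Sum>j<n. \<bar>sq_coef j\<bar>) * norm x" for n
    unfolding f_def sum.cartesian_product[symmetric]
    apply (simp add: sum_distrib_left sum_distrib_right mult.assoc)
    by (rule sum.swap)
  have fc: "convergent (\<lambda>n. \<Sum>(i,j)\<in>{..<n}\<times>{..<n}. f i j)"
    unfolding fsum
    by (rule convergentI[OF tendsto_mult[OF tendsto_mult[OF summable_LIMSEQ[OF sq_coef_summable]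
         summable_LIMSEQ[OF sq_coef_summable]] tendsto_const]])
  have sq: "(\<Sum>(i,j)\<in>{..<n}\<times>{..<n}. w i j) = Upart n (Upart n x)" for n
  proof -
    have "Upart n (Upart n x) = (\<Sum>i<n. \<Sum>j<n. w i j)"
      by (simp add: Upart_def w_def v_def clin_sum[OF Bk_clin] clin_scaleR[OF Bk_clin] scaleR_sum_right funpow_add)
    then show ?thesis by (simp add: sum.cartesian_product)
  qed
  have lim_sq: "(\<lambda>n. Upart n (Upart n x)) \<longlonglongrightarrow> Uop A lam (Uop A lam x)"
  proof -
    have 1: "(\<lambda>n. Upart n (Upart n x - Uop A lam x)) \<longlonglongrightarrow> 0"
    proof (rule Lim_null_comparison)
      show "\<forall>\<^sub>F n in sequentially. norm (Upart n (Upart n x - Uop A lam x)) \<le> sqC * norm (Upart n x - Uop A lam x)"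
        by (simp add: Upart_norm)
      have "(\<lambda>n. Upart n x - Uop A lam x) \<longlonglongrightarrow> 0" using Upart_lim by (simp add: LIM_zero)
      then have "(\<lambda>n. norm (Upart n x - Uop A lam x)) \<longlonglongrightarrow> 0" by (simp add: tendsto_norm_zero)
      then show "(\<lambda>n. sqC * norm (Upart n x - Uop A lam x)) \<longlonglongrightarrow> 0" by (simp add: tendsto_mult_right_zero)
    qed
    have "(\<lambda>n. Upart n (Upart n x - Uop A lam x) + Upart n (Uop A lam x)) \<longlonglongrightarrow> 0 + Uop A lam (Uop A lam x)"
      by (intro tendsto_add 1 Upart_lim)
    then show ?thesis by (simp add: Upart_diff)
  qed
  have tri: "(\<lambda>n. \<Sum>(i,j)\<in>{(i,j). i+j<n}. w i j) \<longlonglongrightarrow> Uop A lam (Uop A lam x)"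
    by (rule square_to_triangle[OF wf f0 fc]) (simp add: sq lim_sq)
  define h where "h k = (\<Sum>i\<le>k. sq_coef i * sq_coef (k - i)) *\<^sub>R v k" for k
  have treq1: "(\<Sum>(i,j)\<in>{(i,j). i+j<n}. w i j) = (\<Sum>k<n. h k)" for n
  proof -
    have "(\<Sum>(i,j)\<in>{(i,j). i+j<n}. w i j) = (\<Sum>k<n. \<Sum>i\<le>k. w i (k - i))"
      by (rule sum.triangle_reindex)
    also have "\<dots> = (\<Sum>k<n. h k)"
      unfolding h_def scaleR_sum_left
      by (intro sum.cong refl) (simp add: w_def)
    finally show ?thesis .
  qed
  have h_big: "h k = 0" if "2 \<le> k" for k
    using that sq_coef_conv[of k] by (simp add: h_def)
  have treq2: "(\<Sum>k<n. h k) = x - Bop A lam x" if "2 \<le> n" for n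
    using that
  proof (induction n rule: nat_induct_at_least)
    case base
    have "(\<Sum>k<2. h k) = h 0 + h 1" by (simp add: numeral_2_eq_2)
    also have "\<dots> = x - Bop A lam x"
      using sq_coef_conv[of 0] sq_coef_conv[of 1] by (simp add: h_def v_def)
    finally show ?case .
  next
    case (Suc n)
    then show ?case by (simp add: h_big)
  qed
  have "(\<lambda>n. \<Sum>(i,j)\<in>{(i,j). i+j<n}. w i j) \<longlonglongrightarrow> x - Bop A lam x"
  proof (rule tendsto_eventually)
    show "\<forall>\<^sub>F n in sequentially. (\<Sum>(i,j)\<in>{(i,j). i+j<n}. w i j) = x - Bop A lam x"
      unfolding eventually_sequentially using treq1 treq2 by auto
  qed
  with tri show ?thesis by (rule LIMSEQ_unique)
qed

lemma S_sq: "Sop A lam (Sop A lam x) = A x"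
proof -
  have "Sop A lam (Sop A lam x) = sqrt lam *\<^sub>R (sqrt lam *\<^sub>R Uop A lam (Uop A lam x))"
    by (simp add: Sop_def clin_scaleR[OF U_clin])
  also have "\<dots> = (sqrt lam * sqrt lam) *\<^sub>R (x - Bop A lam x)" by (simp add: UU)
  also have "\<dots> = lam *\<^sub>R ((1/lam) *\<^sub>R A x)" using less_imp_le[OF lam_pos] by (simp add: Bop_def)
  also have "\<dots> = A x" using lam_pos by simp
  finally show ?thesis .
qed

lemma S_clin: "clin (Sop A lam)"
proof -
  have "clin (\<lambda>x. complex_of_real (sqrt lam) *\<^sub>C Uop A lam x)" by (rule clin_scale_fun[OF U_clin])
  then show ?thesis unfolding Sop_def[abs_def] by (simp add: scaleR_scaleC)
qed

lemma S_bounded: "bounded_clinear (Sop A lam)"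
  unfolding bounded_clinear_def
proof (intro conjI)
  show "\<forall>x y. Sop A lam (x + y) = Sop A lam x + Sop A lam y" using S_clin by (simp add: clin_def)
  show "\<forall>c x. Sop A lam (c *\<^sub>C x) = c *\<^sub>C Sop A lam x" using S_clin by (simp add: clin_def)
  show "\<exists>K. \<forall>x. norm (Sop A lam x) \<le> norm x * K"
  proof (intro exI allI)
    fix x
    have "norm (Sop A lam x) = sqrt lam * norm (Uop A lam x)" using lam_pos by (simp add: Sop_def)
    also have "\<dots> \<le> sqrt lam * (sqC * norm x)" by (intro mult_left_mono U_norm) (simp add: less_imp_le[OF lam_pos])
    finally show "norm (Sop A lam x) \<le> norm x * (sqrt lam * sqC)" by (simp add: mult_ac)
  qed
qed

lemma S_posf: "posf (Sop A lam)"
  unfolding posf_def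
proof
  fix x
  define c where "c = (\<lambda>k. complex_of_real (sq_coef k) * cinner x ((Bop A lam ^^ k) x))"
  have sumU: "cinner x (Uop A lam x) = (\<Sum>k. c k)"
    unfolding Uop_def c_def
    by (simp add: bounded_linear.suminf[OF bounded_linear_cinner_right U_summable] cinner_scaleR_right)
  have "summable (\<lambda>k. cinner x (sq_coef k *\<^sub>R (Bop A lam ^^ k) x))"
    by (rule bounded_linear.summable[OF bounded_linear_cinner_right U_summable])
  then have csum: "summable c"
    by (simp add: c_def cinner_scaleR_right)
  have ImU: "Im (cinner x (Uop A lam x)) = 0"
  proof -
    have "Im (\<Sum>k. c k) = (\<Sum>k. Im (c k))" by (rule bounded_linear.suminf[OF bounded_linear_Im csum])
    also have "\<dots> = 0" by (simp add: c_def Bk_Im)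
    finally show ?thesis by (simp add: sumU)
  qed
  have ReU: "0 \<le> Re (cinner x (Uop A lam x))"
  proof -
    have Rsum: "summable (\<lambda>k. Re (c k))" by (rule bounded_linear.summable[OF bounded_linear_Re csum])
    have ReEq: "Re (\<Sum>k. c k) = (\<Sum>k. Re (c k))" by (rule bounded_linear.suminf[OF bounded_linear_Re csum])
    have "0 \<le> (\<Sum>k. Re (c k))"
    proof (rule LIMSEQ_le_const[OF summable_LIMSEQ[OF Rsum]])
      show "\<exists>N. \<forall>n\<ge>N. 0 \<le> (\<Sum>k<n. Re (c k))"
      proof (intro exI allI impI)
        fix n :: nat
        have hterm: "sq_coef k * (norm x)\<^sup>2 \<le> Re (c k)" for k
        proof (cases k)
          case 0 then show ?thesis by (simp add: c_def cinner_self_Re)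
        next
          case (Suc j)
          have "Re (c k) = sq_coef k * Re (cinner x ((Bop A lam ^^ k) x))" by (simp add: c_def)
          moreover have "sq_coef k * (norm x)\<^sup>2 \<le> sq_coef k * Re (cinner x ((Bop A lam ^^ k) x))"
            using Suc sq_coef_nonpos[of j] Bk_Re_le[of x k] by (intro mult_left_mono_neg) auto
          ultimately show ?thesis by simp
        qed
        have "0 \<le> (\<Sum>k<n. sq_coef k)"
        proof (cases n)
          case 0 then show ?thesis by simp
        next
          case (Suc N)
          then have "{..<n} = {..N}" by auto
          then show ?thesis using sq_coef_psum[of N] by simp
        qed
        then have "0 \<le> (\<Sum>k<n. sq_coef k) * (norm x)\<^sup>2" by simp
        also have "\<dots> = (\<Sum>k<n. sq_coef k * (norm x)\<^sup>2)" by (simp add: sum_distrib_right)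
        also have "\<dots> \<le> (\<Sum>k<n. Re (c k))" by (rule sum_mono) (rule hterm)
        finally show "0 \<le> (\<Sum>k<n. Re (c k))" .
      qed
    qed
    then show ?thesis by (simp add: sumU ReEq)
  qed
  have "cinner x (Sop A lam x) = complex_of_real (sqrt lam) * cinner x (Uop A lam x)"
    by (simp add: Sop_def cinner_scaleR_right)
  then show "Im (cinner x (Sop A lam x)) = 0 \<and> 0 \<le> Re (cinner x (Sop A lam x))"
    using ImU ReU lam_pos by simp
qed

lemma S_positive: "positive_op (Sop A lam)"
  by (simp add: positive_op_iff S_bounded S_posf)

lemma sqrt_unique:
  assumes R: "positive_op R" and RR: "R \<circ> R = A"
  shows "R = Sop A lam"
proof -
  let ?S = "Sop A lam"
  have Rb: "bounded_clinear R" and Rc: "clin R" and Rp: "posf R"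
    using R by (auto simp: positive_op_iff bounded_clinear_clin)
  have RRx: "R (R x) = A x" for x using fun_cong[OF RR, of x] by simp
  have RA: "R (A x) = A (R x)" for x by (simp add: RRx[symmetric])
  have RS: "R (?S x) = ?S (R x)" for x
    unfolding Sop_def by (simp add: clin_scaleR[OF Rc] U_commute[OF Rb RA])
  show ?thesis
  proof
    fix x
    define y where "y = ?S x - R x"
    have "?S y + R y = 0"
      by (simp add: y_def clin_diff[OF S_clin] clin_diff[OF Rc] S_sq RRx RS)
    then have "cinner y (?S y) + cinner y (R y) = 0" by (simp add: cinner_add_right[symmetric])
    then have "Re (cinner y (?S y)) + Re (cinner y (R y)) = 0" by (metis plus_complex.sel(1) zero_complex.sel(1))
    then have "Re (cinner y (?S y)) = 0" "Re (cinner y (R y)) = 0"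
      using posfD2[OF S_posf, of y] posfD2[OF Rp, of y] by linarith+
    then have Sy: "?S y = 0" and Ry: "R y = 0"
      using posf_zero_imp[OF S_clin S_posf] posf_zero_imp[OF Rc Rp] by blast+
    have "cinner y y = cinner y (?S x) - cinner y (R x)" by (simp add: y_def cinner_diff_right)
    also have "\<dots> = cinner (?S y) x - cinner (R y) x"
      by (simp add: posf_selfadj[OF S_clin S_posf] posf_selfadj[OF Rc Rp])
    also have "\<dots> = 0" by (simp add: Sy Ry)
    finally have "y = 0" by (simp add: cinner_self_eq_zero)
    then show "R x = ?S x" by (simp add: y_def)
  qed
qed

lemma op_sqrt_eq: "op_sqrt A = Sop A lam"
  unfolding op_sqrt_def
proof (rule the_equality)
  show "positive_op (Sop A lam) \<and> Sop A lam \<circ> Sop A lam = A"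
    by (simp add: S_positive comp_def S_sq)
  show "\<And>R. positive_op R \<and> R \<circ> R = A \<Longrightarrow> R = Sop A lam"
    using sqrt_unique by blast
qed

end

lemma op_sqrt_props:
  assumes A: "positive_op (A :: 'a::chilbert_space \<Rightarrow> 'a)"
  shows "positive_op (op_sqrt A)" "\<And>x. op_sqrt A (op_sqrt A x) = A x"
proof -
  obtain K where K: "\<And>x. norm (A x) \<le> norm x * K"
    using A by (auto simp: positive_op_def bounded_clinear_def)
  define lam where "lam = \<bar>K\<bar> + 1"
  have lam_pos: "0 < lam" by (simp add: lam_def add_nonneg_pos)
  have lb: "norm (A x) \<le> lam * norm x" for x
  proof -
    have "norm (A x) \<le> norm x * K" by (rule K)
    also have "\<dots> \<le> norm x * lam" by (intro mult_left_mono) (auto simp: lam_def)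
    finally show ?thesis by (simp add: mult.commute)
  qed
  interpret sqctx A lam using A lam_pos lb by unfold_locales
  show "positive_op (op_sqrt A)" by (simp add: op_sqrt_eq S_positive)
  show "op_sqrt A (op_sqrt A x) = A x" for x by (simp add: op_sqrt_eq S_sq)
qed


lemma bounded_clinear_id: "bounded_clinear (\<lambda>x::'a::complex_inner. x)"
  unfolding bounded_clinear_def by (intro conjI allI exI[of _ 1]) simp_all

lemma bounded_clinear_comp:
  assumes f: "bounded_clinear f" and g: "bounded_clinear g"
  shows "bounded_clinear (\<lambda>x. f (g x))"
proof -
  obtain Kf where Kf: "\<And>x. norm (f x) \<le> norm x * Kf" using bounded_clinear_bound[OF f] by blast
  obtain Kg where Kg: "\<And>x. norm (g x) \<le> norm x * Kg" using bounded_clinear_bound[OF g] by blast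
  have "norm (f (g x)) \<le> norm x * (\<bar>Kg\<bar> * \<bar>Kf\<bar>)" for x
  proof -
    have "norm (f (g x)) \<le> norm (g x) * \<bar>Kf\<bar>"
      using Kf[of "g x"] by (meson abs_ge_self mult_left_mono norm_ge_zero order_trans)
    also have "\<dots> \<le> (norm x * \<bar>Kg\<bar>) * \<bar>Kf\<bar>"
      using Kg[of x] by (intro mult_right_mono) (auto intro: order_trans[OF _ mult_left_mono[OF abs_ge_self]])
    finally show ?thesis by (simp add: mult_ac)
  qed
  then show ?thesis
    unfolding bounded_clinear_def
    by (simp add: clin_add[OF bounded_clinear_clin[OF f]] clin_add[OF bounded_clinear_clin[OF g]]
        clin_scale[OF bounded_clinear_clin[OF f]] clin_scale[OF bounded_clinear_clin[OF g]]) blast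
qed

lemma cdim_mono:
  assumes "V \<subseteq> cv.span W"
  shows "cdim V \<le> cdim W"
  unfolding cdim_def cspan_cv
proof (rule SUP_subset_mono)
  have "cv.span V \<subseteq> cv.span W" using cv.span_mono[OF assms] by (simp add: cv.span_span)
  then show "{B. finite B \<and> B \<subseteq> cv.span V \<and> \<not> cv.dependent B} \<subseteq> {B. finite B \<and> B \<subseteq> cv.span W \<and> \<not> cv.dependent B}"
    by auto
qed simp

lemma cdim_inj_image:
  assumes f: "clin f" and inj: "\<And>x. x \<in> cv.span V \<Longrightarrow> f x = 0 \<Longrightarrow> x = 0"
    and im: "f ` cv.span V \<subseteq> cv.span W"
  shows "cdim V \<le> cdim W"
  unfolding cdim_def cspan_cv
proof (rule SUP_mono)
  fix B assume B: "B \<in> {B. finite B \<and> B \<subseteq> cv.span V \<and> \<not> cv.dependent B}"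
  have mh: "module_hom scaleC scaleC f" by (rule clin_module_hom[OF f])
  have spB: "cv.span B \<subseteq> cv.span V" using B cv.span_mono[of B "cv.span V"] by (auto simp: cv.span_span)
  have injB: "inj_on f (cv.span B)"
  proof (rule inj_onI)
    fix x y assume "x \<in> cv.span B" "y \<in> cv.span B" "f x = f y"
    then have "x - y \<in> cv.span V" "f (x - y) = 0"
      using spB cv.span_diff[of x B y] by (auto simp: clin_diff[OF f])
    then have "x - y = 0" by (rule inj)
    then show "x = y" by simp
  qed
  have ind: "\<not> cv.dependent (f ` B)"
    using module_hom.independent_injective_image[OF mh, of B] B injB by auto
  have inj2: "inj_on f B" using injB cv.span_superset[of B] by (auto intro: inj_on_subset)
  have "f ` B \<subseteq> cv.span W" using B im by auto
  then have "f ` B \<in> {B. finite B \<and> B \<subseteq> cv.span W \<and> \<not> cv.dependent B}" using B ind by auto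
  moreover have "ennreal (real (card B)) \<le> ennreal (real (card (f ` B)))"
    using card_image[OF inj2] by simp
  ultimately show "\<exists>B'\<in>{B. finite B \<and> B \<subseteq> cv.span W \<and> \<not> cv.dependent B}. ennreal (real (card B)) \<le> ennreal (real (card B'))"
    by blast
qed

lemma cdim_fin_dim:
  assumes "V \<subseteq> cv.span F" "finite F"
  shows "cdim V = ennreal (real (cv.dim V))"
proof -
  obtain BV where BV: "BV \<subseteq> V" "cv.independent BV" "V \<subseteq> cv.span BV" "card BV = cv.dim V"
    using cv.basis_exists by blast
  have finBV: "finite BV" using cv.independent_span_bound[OF assms(2) BV(2)] BV(1) assms(1) by blast
  have le: "card B \<le> cv.dim V" if "finite B" "B \<subseteq> cv.span V" "cv.independent B" for B
  proof -
    have "cv.span V \<subseteq> cv.span BV" using cv.span_mono[OF BV(3)] by (simp add: cv.span_span)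
    then have "B \<subseteq> cv.span BV" using that by auto
    then show ?thesis using cv.independent_span_bound[OF finBV that(3)] BV(4) by simp
  qed
  show ?thesis
    unfolding cdim_def cspan_cv
  proof (rule antisym)
    show "(SUP B\<in>{B. finite B \<and> B \<subseteq> cv.span V \<and> \<not> cv.dependent B}. ennreal (real (card B))) \<le> ennreal (real (cv.dim V))"
      by (rule SUP_least) (use le in auto)
    have "BV \<in> {B. finite B \<and> B \<subseteq> cv.span V \<and> \<not> cv.dependent B}"
      using finBV BV cv.span_superset[of V] by auto
    then show "ennreal (real (cv.dim V)) \<le> (SUP B\<in>{B. finite B \<and> B \<subseteq> cv.span V \<and> \<not> cv.dependent B}. ennreal (real (card B)))"
      using BV(4) by (auto intro: SUP_upper2)
  qed
qed

lemma cdim_finite_span: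
  assumes "cdim V < \<infinity>"
  shows "\<exists>B. finite B \<and> V \<subseteq> cv.span B"
proof -
  obtain r where r: "cdim V = ennreal r" "0 \<le> r" using assms by (cases "cdim V") auto
  define P where "P B \<longleftrightarrow> finite B \<and> B \<subseteq> cv.span V \<and> cv.independent B" for B
  have bnd: "card B \<le> nat \<lceil>r\<rceil>" if "P B" for B
  proof -
    have "ennreal (real (card B)) \<le> cdim V"
      unfolding cdim_def cspan_cv using that by (intro SUP_upper) (auto simp: P_def)
    then have "real (card B) \<le> r" using r by (simp add: ennreal_le_iff)
    then show ?thesis by linarith
  qed
  have P0: "P {}" using cv.independent_empty by (simp add: P_def)
  have "\<forall>y. P y \<longrightarrow> card y < Suc (nat \<lceil>r\<rceil>)" using bnd by (simp add: less_Suc_eq_le)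
  from Lattices_Big.ex_has_greatest_nat[OF P0 this]
  obtain B where PB: "P B" and maxB: "\<And>B'. P B' \<Longrightarrow> card B' \<le> card B" by blast
  have "V \<subseteq> cv.span B"
  proof
    fix v assume v: "v \<in> V"
    show "v \<in> cv.span B"
    proof (rule ccontr)
      assume nv: "v \<notin> cv.span B"
      then have "v \<notin> B" using cv.span_superset by blast
      have "P (insert v B)"
        using PB v nv cv.span_superset[of V] by (auto simp: P_def cv.independent_insert)
      then have "card (insert v B) \<le> card B" by (rule maxB)
      then show False using \<open>v \<notin> B\<close> PB by (simp add: P_def)
    qed
  qed
  then show ?thesis using PB by (auto simp: P_def)
qed

lemma orth_span:
  assumes "\<And>g. g \<in> G \<Longrightarrow> cinner x g = 0"
  shows "\<And>m. m \<in> cv.span G \<Longrightarrow> cinner x m = 0"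
proof -
  have "cv.span G \<subseteq> {m. cinner x m = 0}"
  proof (rule cv.span_minimal)
    show "G \<subseteq> {m. cinner x m = 0}" using assms by auto
    show "cv.subspace {m. cinner x m = 0}"
      unfolding cv.subspace_def by (simp add: cinner_add_right cinner_scaleC_right)
  qed
  then show "\<And>m. m \<in> cv.span G \<Longrightarrow> cinner x m = 0" by auto
qed

lemma span_clin_image: "clin f \<Longrightarrow> f ` cv.span S = cv.span (f ` S)"
  using module_hom.span_image[OF clin_module_hom] by metis

lemma span_sub_span: "A \<subseteq> cv.span B \<Longrightarrow> cv.span A \<subseteq> cv.span B"
  by (rule cv.span_minimal[OF _ cv.subspace_span])

lemma dim_increment:
  fixes T :: "nat \<Rightarrow> 'a::complex_vector \<Rightarrow> 'a"
  assumes Tc: "\<And>i. i < n \<Longrightarrow> clin (T i)"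
    and V: "cv.span V = V" and W: "cv.span W = W" and VW: "V \<subseteq> W"
    and FW: "W \<subseteq> cv.span F" "finite F"
    and TV: "\<And>i. i < n \<Longrightarrow> T i ` V \<subseteq> W"
    and X: "X \<subseteq> cv.span (W \<union> (\<Union>i<n. T i ` W))"
  shows "cv.dim X \<le> cv.dim W + n * (cv.dim W - cv.dim V)"
proof -
  obtain BV where BV: "BV \<subseteq> V" "cv.independent BV" "V \<subseteq> cv.span BV" "card BV = cv.dim V"
    using cv.basis_exists by blast
  obtain BW where BW: "BV \<subseteq> BW" "BW \<subseteq> W" "cv.independent BW" "W \<subseteq> cv.span BW"
    using cv.maximal_independent_subset_extend[of BV W] BV(1,2) VW by blast
  have cBW: "card BW = cv.dim W" using cv.basis_card_eq_dim[OF BW(2,4,3)] .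
  have finBW: "finite BW" using cv.independent_span_bound[OF FW(2) BW(3)] BW(2) FW(1) by blast
  define Z where "Z = BW \<union> (\<Union>i<n. T i ` (BW - BV))"
  have finZ: "finite Z" unfolding Z_def using finBW by blast
  have "BW \<subseteq> Z" unfolding Z_def by blast
  then have WZ: "W \<subseteq> cv.span Z" using BW(4) cv.span_mono[of BW Z] by blast
  have TWZ: "T i ` W \<subseteq> cv.span Z" if i: "i < n" for i
  proof -
    have "T i ` BW \<subseteq> cv.span Z"
    proof
      fix y assume "y \<in> T i ` BW"
      then obtain b where b: "b \<in> BW" "y = T i b" by blast
      show "y \<in> cv.span Z"
      proof (cases "b \<in> BV")
        case True
        then have "y \<in> W" using TV[OF i] BV(1) b by auto
        then show ?thesis using WZ by auto
      next
        case False
        then have "y \<in> Z" using b i unfolding Z_def by blast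
        then show ?thesis using cv.span_superset by blast
      qed
    qed
    then have "cv.span (T i ` BW) \<subseteq> cv.span Z" by (rule span_sub_span)
    moreover have "T i ` W \<subseteq> T i ` cv.span BW" using BW(4) by auto
    ultimately show ?thesis using span_clin_image[OF Tc[OF i], of BW] by auto
  qed
  have "W \<union> (\<Union>i<n. T i ` W) \<subseteq> cv.span Z" using WZ TWZ by auto
  then have "cv.span (W \<union> (\<Union>i<n. T i ` W)) \<subseteq> cv.span Z" by (rule span_sub_span)
  with X have "X \<subseteq> cv.span Z" by auto
  then have "cv.dim X \<le> card Z" by (rule cv.dim_le_card[OF _ finZ])
  also have "card Z \<le> card BW + card (\<Union>i<n. T i ` (BW - BV))"
    unfolding Z_def by (rule card_Un_le)
  also have "card (\<Union>i<n. T i ` (BW - BV)) \<le> (\<Sum>i<n. card (T i ` (BW - BV)))"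
    by (rule card_UN_le) simp
  also have "\<dots> \<le> (\<Sum>i<n. card (BW - BV))"
    by (rule sum_mono) (rule card_image_le, simp add: finBW)
  also have "\<dots> = n * (card BW - card BV)"
    using finBW BW(1) by (simp add: card_Diff_subset finite_subset)
  finally show ?thesis using cBW BV(4) by simp
qed


lemma word_op_Nil[simp]: "word_op T [] = id"
  by (simp add: word_op_def)

lemma word_op_Cons[simp]: "word_op T (i # \<beta>) = T i \<circ> word_op T \<beta>"
  by (simp add: word_op_def)

locale mctx =
  fixes n :: nat and T :: "nat \<Rightarrow> 'a::chilbert_space \<Rightarrow> 'a" and D :: "'a \<Rightarrow> 'a"
  assumes n2: "n \<ge> 2" and Tb: "\<And>i. i < n \<Longrightarrow> bounded_clinear (T i)"
    and Dpos: "positive_op D" and Dle: "op_le (phi_map n T D) D"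
begin

definition "Dl = (\<lambda>x. D x - phi_map n T D x)"
definition "Sq = op_sqrt Dl"
definition "Ts i = cadjoint (T i)"
definition "P k = (\<lambda>x. D x - (phi_map n T ^^ Suc k) D x)"
definition "M k = M_space n T D k"
definition "G k = {word_op T \<alpha> \<xi> | \<alpha> \<xi>. \<alpha> \<in> words n \<and> length \<alpha> \<le> k \<and> \<xi> \<in> range Sq}"

lemma Dl_pos: "positive_op Dl"
  using Dle by (simp add: op_le_def Dl_def)

lemma Dl_clin: "clin Dl" using Dl_pos by (simp add: positive_op_iff bounded_clinear_clin)

lemma Sq_pos: "positive_op Sq" unfolding Sq_def by (rule op_sqrt_props(1)[OF Dl_pos])
lemma Sq_sq: "Sq (Sq x) = Dl x" unfolding Sq_def by (rule op_sqrt_props(2)[OF Dl_pos])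
lemma Sq_clin: "clin Sq" using Sq_pos by (simp add: positive_op_iff bounded_clinear_clin)
lemma Sq_posf: "posf Sq" using Sq_pos by (simp add: positive_op_iff)
lemma Sq_selfadj: "cinner (Sq x) y = cinner x (Sq y)" by (rule posf_selfadj[OF Sq_clin Sq_posf])

lemma T_clin: "i < n \<Longrightarrow> clin (T i)" using Tb bounded_clinear_clin by blast
lemma Ts_adj: "i < n \<Longrightarrow> cinner (Ts i x) y = cinner x (T i y)"
  unfolding Ts_def by (rule cadjoint[OF Tb])
lemma Ts_adj': "i < n \<Longrightarrow> cinner x (T i y) = cinner (Ts i x) y"
  using Ts_adj by simp
lemma Ts_clin: "i < n \<Longrightarrow> clin (Ts i)"
  unfolding Ts_def by (rule cadjoint_clin[OF Tb])

lemma phi_unfold: "phi_map n T X x = (\<Sum>i<n. T i (X (Ts i x)))"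
  by (simp add: phi_map_def Ts_def)

lemma P0: "P 0 = Dl"
  by (simp add: P_def Dl_def)

lemma P_Suc: "P (Suc k) x = Dl x + (\<Sum>i<n. T i (P k (Ts i x)))"
proof -
  let ?Y = "(phi_map n T ^^ Suc k) D"
  have "(\<Sum>i<n. T i (P k (Ts i x))) = (\<Sum>i<n. T i (D (Ts i x)) - T i (?Y (Ts i x)))"
    by (rule sum.cong) (simp_all add: P_def clin_diff[OF T_clin])
  also have "\<dots> = (\<Sum>i<n. T i (D (Ts i x))) - (\<Sum>i<n. T i (?Y (Ts i x)))"
    by (rule sum_subtractf)
  finally show ?thesis
    by (simp add: P_def Dl_def phi_unfold)
qed

lemma P_Suc_fun: "P (Suc k) = (\<lambda>x. Dl x + (\<Sum>i<n. T i (P k (Ts i x))))"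
  by (rule ext) (rule P_Suc)

lemma P_clin: "clin (P k)"
proof (induction k)
  case 0 then show ?case by (simp add: P0 Dl_clin)
next
  case (Suc k)
  have "clin (\<lambda>x. T i (P k (Ts i x)))" if "i \<in> {..<n}" for i
  proof -
    have i: "i < n" using that by simp
    have "clin (\<lambda>x. P k (Ts i x))" by (rule clin_comp[OF Suc Ts_clin[OF i]])
    then show ?thesis by (rule clin_comp[OF T_clin[OF i]])
  qed
  then have "clin (\<lambda>x. \<Sum>i<n. T i (P k (Ts i x)))"
    by (rule clin_sum_fun)
  then show ?case unfolding P_Suc_fun by (rule clin_add_fun[OF Dl_clin])
qed

lemma P_inner_Suc: "cinner x (P (Suc k) x) = cinner x (Dl x) + (\<Sum>i<n. cinner (Ts i x) (P k (Ts i x)))"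
  by (simp add: P_Suc cinner_add_right cinner_sum_right Ts_adj')

lemma P_posf: "posf (P k)"
proof (induction k)
  case 0 then show ?case using Dl_pos by (simp add: P0 positive_op_iff)
next
  case (Suc k)
  show ?case
    unfolding posf_def P_inner_Suc
    using posfD[OF Suc] posfD2[OF Suc] posfD[OF Dl_pos[unfolded positive_op_iff, THEN conjunct2]]
      posfD2[OF Dl_pos[unfolded positive_op_iff, THEN conjunct2]]
    by (simp add: Im_sum Re_sum sum_nonneg)
qed

lemma G0: "G 0 = range Sq"
  unfolding G_def words_def by force

lemma GSuc: "G (Suc k) = range Sq \<union> (\<Union>i<n. T i ` G k)"
proof
  show "G (Suc k) \<subseteq> range Sq \<union> (\<Union>i<n. T i ` G k)"
  proof
    fix y assume "y \<in> G (Suc k)"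
    then obtain \<alpha> \<xi> where y: "y = word_op T \<alpha> \<xi>" "\<alpha> \<in> words n" "length \<alpha> \<le> Suc k" "\<xi> \<in> range Sq"
      by (auto simp: G_def)
    show "y \<in> range Sq \<union> (\<Union>i<n. T i ` G k)"
    proof (cases \<alpha>)
      case Nil then show ?thesis using y by simp
    next
      case (Cons i \<beta>)
      then have "i < n" "\<beta> \<in> words n" "length \<beta> \<le> k" using y by (auto simp: words_def)
      moreover have "y = T i (word_op T \<beta> \<xi>)" using y Cons by simp
      ultimately show ?thesis using y(4) unfolding G_def by blast
    qed
  qed
  show "range Sq \<union> (\<Union>i<n. T i ` G k) \<subseteq> G (Suc k)"
  proof
    fix y assume "y \<in> range Sq \<union> (\<Union>i<n. T i ` G k)"
    then show "y \<in> G (Suc k)"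
    proof
      assume "y \<in> range Sq"
      then show ?thesis unfolding G_def
        by (intro CollectI exI[of _ "[]"] exI[of _ y]) (simp add: words_def)
    next
      assume "y \<in> (\<Union>i<n. T i ` G k)"
      then obtain i \<beta> \<xi> where "i < n" "\<beta> \<in> words n" "length \<beta> \<le> k" "\<xi> \<in> range Sq"
        "y = T i (word_op T \<beta> \<xi>)" by (auto simp: G_def)
      then show ?thesis unfolding G_def
        by (intro CollectI exI[of _ "i # \<beta>"] exI[of _ \<xi>]) (simp add: words_def)
    qed
  qed
qed

lemma M_G: "M k = cv.span (G k)"
  by (simp add: M_def M_space_def G_def cspan_cv Sq_def Dl_def)

lemma M0: "M 0 = cv.span (range Sq)"
  by (simp add: M_G G0)

lemma MSuc: "M (Suc k) = cv.span (range Sq \<union> (\<Union>i<n. T i ` M k))"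
  unfolding M_G GSuc
proof (rule iffD2[OF cv.span_eq], rule conjI)
  have "G k \<subseteq> cv.span (G k)" by (rule cv.span_superset)
  then have "range Sq \<union> (\<Union>i<n. T i ` G k) \<subseteq> range Sq \<union> (\<Union>i<n. T i ` cv.span (G k))" by blast
  also have "\<dots> \<subseteq> cv.span (range Sq \<union> (\<Union>i<n. T i ` cv.span (G k)))" by (rule cv.span_superset)
  finally show "range Sq \<union> (\<Union>i<n. T i ` G k) \<subseteq> cv.span (range Sq \<union> (\<Union>i<n. T i ` cv.span (G k)))" .
  show "range Sq \<union> (\<Union>i<n. T i ` cv.span (G k)) \<subseteq> cv.span (range Sq \<union> (\<Union>i<n. T i ` G k))"
  proof
    fix y assume "y \<in> range Sq \<union> (\<Union>i<n. T i ` cv.span (G k))"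
    then show "y \<in> cv.span (range Sq \<union> (\<Union>i<n. T i ` G k))"
    proof
      assume "y \<in> range Sq" then show ?thesis by (auto intro: cv.span_base)
    next
      assume "y \<in> (\<Union>i<n. T i ` cv.span (G k))"
      then obtain i where i: "i < n" "y \<in> T i ` cv.span (G k)" by blast
      then have "y \<in> cv.span (T i ` G k)" using span_clin_image[OF T_clin[OF i(1)]] by blast
      moreover have "cv.span (T i ` G k) \<subseteq> cv.span (range Sq \<union> (\<Union>i<n. T i ` G k))"
        by (rule cv.span_mono) (use i in blast)
      ultimately show ?thesis by blast
    qed
  qed
qed

lemma M_subspace: "cv.subspace (M k)"
  by (simp add: M_G)

lemma M_span: "cv.span (M k) = M k"
  by (simp add: M_G cv.span_span)

lemma M_Suc_mono: "M k \<subseteq> M (Suc k)"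
proof (induction k)
  case 0 show ?case unfolding MSuc M0 by (rule cv.span_mono) blast
next
  case (Suc k)
  have "cv.span (range Sq \<union> (\<Union>i<n. T i ` M k)) \<subseteq> cv.span (range Sq \<union> (\<Union>i<n. T i ` M (Suc k)))"
    by (rule cv.span_mono) (use Suc.IH in blast)
  then show ?case by (simp only: MSuc[symmetric])
qed

lemma M_mono: "k \<le> l \<Longrightarrow> M k \<subseteq> M l"
  using lift_Suc_mono_le[of M, OF M_Suc_mono] by blast

lemma TM: "i < n \<Longrightarrow> T i ` M k \<subseteq> M (Suc k)"
proof -
  assume i: "i < n"
  have "T i ` M k \<subseteq> range Sq \<union> (\<Union>i<n. T i ` M k)" using i by blast
  also have "\<dots> \<subseteq> cv.span (range Sq \<union> (\<Union>i<n. T i ` M k))" by (rule cv.span_superset)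
  finally show ?thesis by (simp only: MSuc)
qed

lemma RS: "range Sq \<subseteq> M k"
proof -
  have "range Sq \<subseteq> M 0" unfolding M0 by (rule cv.span_superset)
  then show ?thesis using M_mono[of 0 k] by auto
qed

lemma P_range: "P k x \<in> M k"
proof (induction k arbitrary: x)
  case 0
  have "P 0 x = Sq (Sq x)" by (simp add: P0 Sq_sq)
  then show ?case using RS by auto
next
  case (Suc k)
  have "Dl x \<in> M (Suc k)" using RS by (auto simp: Sq_sq[symmetric])
  moreover have "(\<Sum>i<n. T i (P k (Ts i x))) \<in> M (Suc k)"
  proof (rule cv.subspace_sum[OF M_subspace])
    fix i assume "i \<in> {..<n}"
    then have "T i ` M k \<subseteq> M (Suc k)" by (intro TM) simp
    moreover have "T i (P k (Ts i x)) \<in> T i ` M k" by (rule imageI[OF Suc.IH])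
    ultimately show "T i (P k (Ts i x)) \<in> M (Suc k)" by blast
  qed
  ultimately show ?case unfolding P_Suc by (rule cv.subspace_add[OF M_subspace])
qed

lemma Sq_zero: "Re (cinner x (Dl x)) = 0 \<Longrightarrow> Sq x = 0"
proof -
  assume h: "Re (cinner x (Dl x)) = 0"
  have "cinner x (Dl x) = cinner (Sq x) (Sq x)" by (simp add: Sq_sq[symmetric] Sq_selfadj)
  then have "(norm (Sq x))\<^sup>2 = 0" using h by (simp add: cinner_self_Re[symmetric])
  then show ?thesis by simp
qed

lemma P_orth: "Re (cinner x (P k x)) = 0 \<Longrightarrow> m \<in> M k \<Longrightarrow> cinner x m = 0"
proof (induction k arbitrary: x m)
  case 0
  then have "Sq x = 0" by (intro Sq_zero) (simp add: P0)
  then have "cinner x g = 0" if "g \<in> range Sq" for g using that by (auto simp: Sq_selfadj[symmetric])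
  then show ?case using orth_span[of "range Sq" x m] 0 by (simp add: M0)
next
  case (Suc k)
  have Dl_posf: "posf Dl" using Dl_pos by (simp add: positive_op_iff)
  have nn: "\<forall>i\<in>{..<n}. 0 \<le> Re (cinner (Ts i x) (P k (Ts i x)))" using posfD2[OF P_posf] by blast
  have "Re (cinner x (Dl x)) + (\<Sum>i<n. Re (cinner (Ts i x) (P k (Ts i x)))) = 0"
    using Suc.prems(1) by (simp add: P_inner_Suc Re_sum)
  moreover have "0 \<le> (\<Sum>i<n. Re (cinner (Ts i x) (P k (Ts i x))))" by (rule sum_nonneg) (use nn in blast)
  moreover have "0 \<le> Re (cinner x (Dl x))" by (rule posfD2[OF Dl_posf])
  ultimately have z1: "Re (cinner x (Dl x)) = 0" and z2: "(\<Sum>i<n. Re (cinner (Ts i x) (P k (Ts i x)))) = 0"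
    by linarith+
  have "\<forall>i\<in>{..<n}. Re (cinner (Ts i x) (P k (Ts i x))) = 0"
    using z2 sum_nonneg_eq_0_iff[of "{..<n}" "\<lambda>i. Re (cinner (Ts i x) (P k (Ts i x)))"] nn by simp
  then have z3: "Re (cinner (Ts i x) (P k (Ts i x))) = 0" if "i < n" for i
    using that by simp
  have "Sq x = 0" by (rule Sq_zero[OF z1])
  then have g1: "cinner x g = 0" if "g \<in> range Sq" for g using that by (auto simp: Sq_selfadj[symmetric])
  have g2: "cinner x g = 0" if "g \<in> (\<Union>i<n. T i ` M k)" for g
  proof -
    obtain i m where "i < n" "m \<in> M k" "g = T i m" using \<open>g \<in> _\<close> by blast
    then show ?thesis using Suc.IH[OF z3] by (simp add: Ts_adj')
  qed
  have mm: "m \<in> cv.span (range Sq \<union> (\<Union>i<n. T i ` M k))" using Suc.prems(2) by (simp only: MSuc)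
  have gg: "cinner x g = 0" if "g \<in> range Sq \<union> (\<Union>i<n. T i ` M k)" for g
    using that g1 g2 by blast
  show ?case by (rule orth_span[OF gg mm])
qed

lemma P_inj: "x \<in> M k \<Longrightarrow> P k x = 0 \<Longrightarrow> x = 0"
proof -
  assume x: "x \<in> M k" and "P k x = 0"
  then have "Re (cinner x (P k x)) = 0" by simp
  then have "cinner x x = 0" by (rule P_orth[OF _ x])
  then show "x = 0" by (simp add: cinner_self_eq_zero)
qed

lemma rank_P: "op_rank (P k) = cdim (M k)"
  unfolding op_rank_def
proof (rule antisym)
  show "cdim (range (P k)) \<le> cdim (M k)"
    by (rule cdim_mono) (auto simp: M_span P_range)
  show "cdim (M k) \<le> cdim (range (P k))"
  proof (rule cdim_inj_image[OF P_clin])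
    show "\<And>x. x \<in> cv.span (M k) \<Longrightarrow> P k x = 0 \<Longrightarrow> x = 0" using P_inj by (simp add: M_span)
    have "P k ` cv.span (M k) \<subseteq> range (P k)" by blast
    also have "\<dots> \<subseteq> cv.span (range (P k))" by (rule cv.span_superset)
    finally show "P k ` cv.span (M k) \<subseteq> cv.span (range (P k))" .
  qed
qed

end


context mctx begin

definition "Wk k = {\<alpha> \<in> words n. length \<alpha> \<le> k}"
definition "Wadj \<alpha> = cadjoint (word_op T \<alpha>)"
definition "Q k h = (\<Sum>\<alpha>\<in>Wk k. word_op T \<alpha> (Sq (Sq (Wadj \<alpha> h))))"

lemma Wk_finite: "finite (Wk k)"
proof (rule finite_subset)
  show "Wk k \<subseteq> {xs. set xs \<subseteq> {..<n} \<and> length xs \<le> k}"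
    by (auto simp: Wk_def words_def)
  show "finite {xs. set xs \<subseteq> {..<n} \<and> length xs \<le> k}" by (rule finite_lists_length_le) simp
qed

lemma word_op_bounded: "\<alpha> \<in> words n \<Longrightarrow> bounded_clinear (word_op T \<alpha>)"
proof (induction \<alpha>)
  case Nil then show ?case using bounded_clinear_id by (simp add: id_def)
next
  case (Cons i \<beta>)
  then have "i < n" "\<beta> \<in> words n" by (auto simp: words_def)
  then have "bounded_clinear (\<lambda>x. T i (word_op T \<beta> x))"
    using Cons.IH by (intro bounded_clinear_comp[OF Tb]) auto
  then show ?case by (simp add: comp_def)
qed

lemma Wadj_prop: "\<alpha> \<in> words n \<Longrightarrow> cinner (Wadj \<alpha> x) y = cinner x (word_op T \<alpha> y)"
  unfolding Wadj_def by (rule cadjoint[OF word_op_bounded])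

lemma Wadj_Nil: "Wadj [] = (\<lambda>x. x)"
  unfolding Wadj_def by (rule cadjoint_eqI) simp

lemma Wadj_Cons: "i < n \<Longrightarrow> \<beta> \<in> words n \<Longrightarrow> Wadj (i # \<beta>) = (\<lambda>x. Wadj \<beta> (Ts i x))"
  unfolding Wadj_def
  by (rule cadjoint_eqI) (simp add: cadjoint[OF word_op_bounded] Ts_adj)

lemma Wk0: "Wk 0 = {[]}"
  by (auto simp: Wk_def words_def)

lemma WkSuc: "Wk (Suc k) = insert [] ((\<lambda>(i,\<beta>). i # \<beta>) ` ({..<n} \<times> Wk k))"
proof
  show "Wk (Suc k) \<subseteq> insert [] ((\<lambda>(i,\<beta>). i # \<beta>) ` ({..<n} \<times> Wk k))"
  proof
    fix \<alpha> assume a: "\<alpha> \<in> Wk (Suc k)"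
    show "\<alpha> \<in> insert [] ((\<lambda>(i,\<beta>). i # \<beta>) ` ({..<n} \<times> Wk k))"
    proof (cases \<alpha>)
      case Nil then show ?thesis by simp
    next
      case (Cons i \<beta>)
      then have "(i, \<beta>) \<in> {..<n} \<times> Wk k" using a by (auto simp: Wk_def words_def)
      then show ?thesis using Cons by force
    qed
  qed
  show "insert [] ((\<lambda>(i,\<beta>). i # \<beta>) ` ({..<n} \<times> Wk k)) \<subseteq> Wk (Suc k)"
    by (auto simp: Wk_def words_def)
qed

lemma Q_eq_P: "Q k h = P k h"
proof (induction k arbitrary: h)
  case 0
  show ?case by (simp add: Q_def Wk0 Wadj_Nil Sq_sq P0)
next
  case (Suc k)
  let ?g = "\<lambda>\<alpha>. word_op T \<alpha> (Sq (Sq (Wadj \<alpha> h)))"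
  have inj: "inj_on (\<lambda>(i,\<beta>). i # \<beta>) ({..<n} \<times> Wk k)" by (auto simp: inj_on_def)
  have fin: "finite ((\<lambda>(i,\<beta>). i # \<beta>) ` ({..<n} \<times> Wk k))" using Wk_finite by simp
  have "Q (Suc k) h = ?g [] + sum ?g ((\<lambda>(i,\<beta>). i # \<beta>) ` ({..<n} \<times> Wk k))"
    unfolding Q_def WkSuc by (rule sum.insert[OF fin]) auto
  also have "sum ?g ((\<lambda>(i,\<beta>). i # \<beta>) ` ({..<n} \<times> Wk k)) = sum (?g \<circ> (\<lambda>(i,\<beta>). i # \<beta>)) ({..<n} \<times> Wk k)"
    by (rule sum.reindex[OF inj])
  also have "\<dots> = (\<Sum>i<n. \<Sum>\<beta>\<in>Wk k. ?g (i # \<beta>))"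
    by (simp add: sum.cartesian_product split_def)
  also have "\<dots> = (\<Sum>i<n. T i (Q k (Ts i h)))"
  proof (rule sum.cong[OF refl])
    fix i assume i: "i \<in> {..<n}"
    have "(\<Sum>\<beta>\<in>Wk k. ?g (i # \<beta>)) = (\<Sum>\<beta>\<in>Wk k. T i (word_op T \<beta> (Sq (Sq (Wadj \<beta> (Ts i h))))))"
      by (rule sum.cong[OF refl]) (use i in \<open>simp add: Wadj_Cons Wk_def\<close>)
    also have "\<dots> = T i (Q k (Ts i h))"
      unfolding Q_def using i by (simp add: clin_sum[OF T_clin])
    finally show "(\<Sum>\<beta>\<in>Wk k. ?g (i # \<beta>)) = T i (Q k (Ts i h))" .
  qed
  also have "?g [] = Dl h" by (simp add: Wadj_Nil Sq_sq)
  finally show ?case by (simp add: P_Suc Suc.IH)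
qed

lemma Kadj: "poisson_K_adj n T D (fock_proj k (poisson_K n T D h)) = P k h"
proof -
  have sq_eq: "op_sqrt (\<lambda>x. D x - phi_map n T D x) = Sq" by (simp add: Sq_def Dl_def)
  have inf: "infsum (\<lambda>\<alpha>. cinner (poisson_K n T D x \<alpha>) (fock_proj k (poisson_K n T D h) \<alpha>)) (words n)
      = cinner x (Q k h)" for x
  proof -
    let ?f = "\<lambda>\<alpha>. cinner (poisson_K n T D x \<alpha>) (fock_proj k (poisson_K n T D h) \<alpha>)"
    have "infsum ?f (words n) = infsum ?f (Wk k)"
      by (rule infsum_cong_neutral) (auto simp: Wk_def fock_proj_def)
    also have "\<dots> = sum ?f (Wk k)" by (rule infsum_finite[OF Wk_finite])
    also have "\<dots> = (\<Sum>\<alpha>\<in>Wk k. cinner x (word_op T \<alpha> (Sq (Sq (Wadj \<alpha> h)))))"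
    proof (rule sum.cong[OF refl])
      fix \<alpha> assume a: "\<alpha> \<in> Wk k"
      then have aw: "\<alpha> \<in> words n" and al: "length \<alpha> \<le> k" by (auto simp: Wk_def)
      have "?f \<alpha> = cinner (Sq (Wadj \<alpha> x)) (Sq (Wadj \<alpha> h))"
        using aw al by (simp add: poisson_K_def fock_proj_def sq_eq Wadj_def)
      also have "\<dots> = cinner (Wadj \<alpha> x) (Sq (Sq (Wadj \<alpha> h)))" by (rule Sq_selfadj)
      also have "\<dots> = cinner x (word_op T \<alpha> (Sq (Sq (Wadj \<alpha> h))))" by (rule Wadj_prop[OF aw])
      finally show "?f \<alpha> = cinner x (word_op T \<alpha> (Sq (Sq (Wadj \<alpha> h))))" .
    qed
    also have "\<dots> = cinner x (Q k h)" by (simp add: Q_def cinner_sum_right)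
    finally show ?thesis .
  qed
  have "poisson_K_adj n T D (fock_proj k (poisson_K n T D h)) = Q k h"
    unfolding poisson_K_adj_def
  proof (rule the_equality)
    show "\<forall>x. cinner x (Q k h) = infsum (\<lambda>\<alpha>. cinner (poisson_K n T D x \<alpha>) (fock_proj k (poisson_K n T D h) \<alpha>)) (words n)"
      using inf by simp
    fix y assume "\<forall>x. cinner x y = infsum (\<lambda>\<alpha>. cinner (poisson_K n T D x \<alpha>) (fock_proj k (poisson_K n T D h) \<alpha>)) (words n)"
    then have "\<And>x. cinner x y = cinner x (Q k h)" using inf by simp
    then show "y = Q k h" by (rule cinner_ext_right)
  qed
  then show ?thesis by (simp add: Q_eq_P)
qed

lemma Kadj_fun: "(\<lambda>h. poisson_K_adj n T D (fock_proj k (poisson_K n T D h))) = P k"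
  by (rule ext) (rule Kadj)

end


lemma ratio_dec:
  fixes d :: "nat \<Rightarrow> nat" and n :: nat
  assumes mono: "\<And>k. d k \<le> d (Suc k)"
    and i0: "d (Suc 0) \<le> d 0 + n * d 0"
    and iS: "\<And>k. d (Suc (Suc k)) \<le> d (Suc k) + n * (d (Suc k) - d k)"
  shows "decseq (\<lambda>k. real (d k) / real (\<Sum>j\<le>k. n ^ j))"
proof -
  define S where "S k = (\<Sum>j\<le>k. n ^ j)" for k
  define e where "e k = (case k of 0 \<Rightarrow> d 0 | Suc j \<Rightarrow> d (Suc j) - d j)" for k
  have e0: "e 0 = d 0" by (simp add: e_def)
  have eSuc: "e (Suc k) = d (Suc k) - d k" for k by (simp add: e_def)
  have eS: "e (Suc k) \<le> n * e k" for k
  proof (cases k)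
    case 0 then show ?thesis using i0 by (simp add: e_def)
  next
    case (Suc j) then show ?thesis using iS[of j] by (simp add: e_def)
  qed
  have dS: "d (Suc k) = d k + e (Suc k)" for k using mono[of k] by (simp add: eSuc)
  have SS: "S (Suc k) = S k + n ^ Suc k" for k by (simp add: S_def)
  have S0: "S 0 = 1" by (simp add: S_def)
  have Spos: "0 < S k" for k
    using member_le_sum[of 0 "{..k}" "\<lambda>j. n^j"] by (simp add: S_def)
  have claim: "e k * S k \<le> n ^ k * d k" for k
  proof (induction k)
    case 0 then show ?case by (simp add: e0 S0)
  next
    case (Suc k)
    have a: "e (Suc k) * S k \<le> n ^ Suc k * d k"
    proof -
      have "e (Suc k) * S k \<le> (n * e k) * S k" using eS[of k] by (rule mult_right_mono) simp
      also have "\<dots> = n * (e k * S k)" by simp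
      also have "\<dots> \<le> n * (n ^ k * d k)" using Suc.IH by (rule mult_left_mono) simp
      finally show ?thesis by simp
    qed
    have "e (Suc k) * S (Suc k) = e (Suc k) * S k + e (Suc k) * n ^ Suc k" by (simp add: SS algebra_simps)
    also have "\<dots> \<le> n ^ Suc k * d k + e (Suc k) * n ^ Suc k" using a by simp
    also have "\<dots> = n ^ Suc k * d (Suc k)" by (simp add: dS algebra_simps)
    finally show ?case .
  qed
  have key: "d (Suc k) * S k \<le> d k * S (Suc k)" for k
  proof -
    have a: "e (Suc k) * S k \<le> n ^ Suc k * d k"
    proof -
      have "e (Suc k) * S k \<le> (n * e k) * S k" using eS[of k] by (rule mult_right_mono) simp
      also have "\<dots> = n * (e k * S k)" by simp
      also have "\<dots> \<le> n * (n ^ k * d k)" using claim[of k] by (rule mult_left_mono) simp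
      finally show ?thesis by simp
    qed
    have "d (Suc k) * S k = d k * S k + e (Suc k) * S k" by (simp add: dS algebra_simps)
    also have "\<dots> \<le> d k * S k + n ^ Suc k * d k" using a by simp
    also have "\<dots> = d k * S (Suc k)" by (simp add: SS algebra_simps)
    finally show ?thesis .
  qed
  show ?thesis
  proof (rule decseq_SucI)
    fix k
    have "real (d (Suc k)) * real (S k) \<le> real (d k) * real (S (Suc k))"
      using key[of k] by (metis of_nat_le_iff of_nat_mult)
    then show "real (d (Suc k)) / real (\<Sum>j\<le>Suc k. n ^ j) \<le> real (d k) / real (\<Sum>j\<le>k. n ^ j)"
      using Spos[of k] Spos[of "Suc k"] unfolding S_def[symmetric] by (simp add: field_simps)
  qed
qed

lemma geom_ratio_lim:
  fixes n :: nat
  assumes "n \<ge> 2"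
  shows "(\<lambda>j. real (\<Sum>i\<le>j. n ^ i) / real (n ^ Suc j)) \<longlonglongrightarrow> 1 / (real n - 1)"
proof -
  have n1: "real n - 1 > 0" using assms by simp
  have eq: "real (\<Sum>i\<le>j. n ^ i) / real (n ^ Suc j) = (1 - (1 / real n) ^ Suc j) / (real n - 1)" for j
  proof -
    have "real (\<Sum>i\<le>j. n ^ i) = (\<Sum>i<Suc j. real n ^ i)" by (simp add: lessThan_Suc_atMost)
    also have "\<dots> = (real n ^ Suc j - 1) / (real n - 1)" by (rule geometric_sum) (use assms in simp)
    finally have a: "real (\<Sum>i\<le>j. n ^ i) = (real n ^ Suc j - 1) / (real n - 1)" .
    have q: "real n ^ Suc j > 0" using assms by simp
    have gen: "((q - 1) / m) / q = (1 - 1 / q) / m" if "q > 0" "m > 0" for q m :: real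
      using that by (simp add: field_simps)
    have "real (\<Sum>i\<le>j. n ^ i) / real (n ^ Suc j) = ((real n ^ Suc j - 1) / (real n - 1)) / real n ^ Suc j"
      by (simp only: a of_nat_power)
    also have "\<dots> = (1 - 1 / real n ^ Suc j) / (real n - 1)" by (rule gen[OF q n1])
    finally show ?thesis by (simp only: power_one_over)
  qed
  have "(\<lambda>j. (1 / real n) ^ Suc j) \<longlonglongrightarrow> 0"
    using LIMSEQ_realpow_zero[of "1 / real n"] assms filterlim_sequentially_Suc[of "\<lambda>j. (1 / real n) ^ j"]
    by simp
  then have "(\<lambda>j. (1 - (1 / real n) ^ Suc j) / (real n - 1)) \<longlonglongrightarrow> (1 - 0) / (real n - 1)"
    using n1 by (intro tendsto_intros) auto
  then show ?thesis unfolding eq by simp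
qed


theorem theorem6p8:
  fixes n :: nat and T :: "nat \<Rightarrow> 'a::chilbert_space \<Rightarrow> 'a" and D :: "'a \<Rightarrow> 'a"
  assumes "n \<ge> 2"
    and "\<forall>i<n. bounded_clinear (T i)"
    and "positive_op D"
    and "op_le (phi_map n T D) D"
  shows "\<exists>chi::ennreal.
     ((\<lambda>k. cdim (M_space n T D k) / ennreal (real (\<Sum>j\<le>k. n ^ j))) \<longlongrightarrow> chi) sequentially \<and>
     ((\<lambda>k. op_rank (\<lambda>h. poisson_K_adj n T D (fock_proj k (poisson_K n T D h)))
            / ennreal (real (\<Sum>j\<le>k. n ^ j))) \<longlongrightarrow> chi) sequentially \<and>
     (\<exists>L. ((\<lambda>k. op_rank (\<lambda>x. D x - (phi_map n T ^^ k) D x) / ennreal (real (n ^ k)))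
              \<longlongrightarrow> L) sequentially \<and>
          chi = ennreal (real (n - 1)) * L) \<and>
     (chi < \<infinity> \<longleftrightarrow> op_rank (\<lambda>x. D x - phi_map n T D x) < \<infinity>)"
proof -
  interpret mctx n T D using assms by unfold_locales auto
  have seq1eq: "cdim (M_space n T D k) = cdim (M k)" for k by (simp add: M_def)
  have seq2eq: "op_rank (\<lambda>h. poisson_K_adj n T D (fock_proj k (poisson_K n T D h))) = cdim (M k)" for k
    by (simp add: Kadj_fun rank_P)
  have seq3eq: "op_rank (\<lambda>x. D x - (phi_map n T ^^ Suc j) D x) = cdim (M j)" for j
    using rank_P[of j] by (simp add: P_def)
  have rank0: "op_rank (\<lambda>x. D x - phi_map n T D x) = cdim (M 0)"
    using rank_P[of 0] by (simp add: P0 Dl_def)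
  have Spos: "0 < real (\<Sum>j\<le>k. n ^ j)" for k
  proof -
    have "0 < (\<Sum>j\<le>k. n ^ j)" using member_le_sum[of 0 "{..k}" "\<lambda>j. n^j"] by simp
    then show ?thesis by (simp only: of_nat_0_less_iff)
  qed
  have npos: "0 < real (n ^ k)" for k using assms(1) by simp
  have n1: "ennreal (real (n - 1)) \<noteq> 0" using assms(1) by simp
  show ?thesis
  proof (cases "cdim (M 0) = \<infinity>")
    case True
    have inf: "cdim (M k) = \<infinity>" for k
    proof -
      have "M 0 \<subseteq> cv.span (M k)" using M_mono[of 0 k] by (simp add: M_span)
      then have "cdim (M 0) \<le> cdim (M k)" by (rule cdim_mono)
      then show ?thesis using True by (simp add: top_unique)
    qed
    have topdiv: "(top::ennreal) / ennreal x = top" for x by (simp add: ennreal_top_divide)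
    show ?thesis
    proof (rule exI[of _ "\<infinity>::ennreal"], intro conjI)
      show "((\<lambda>k. cdim (M_space n T D k) / ennreal (real (\<Sum>j\<le>k. n ^ j))) \<longlongrightarrow> \<infinity>) sequentially"
        by (simp add: seq1eq inf topdiv)
      show "((\<lambda>k. op_rank (\<lambda>h. poisson_K_adj n T D (fock_proj k (poisson_K n T D h)))
            / ennreal (real (\<Sum>j\<le>k. n ^ j))) \<longlongrightarrow> \<infinity>) sequentially"
        by (simp add: seq2eq inf topdiv)
      have "((\<lambda>k. op_rank (\<lambda>x. D x - (phi_map n T ^^ k) D x) / ennreal (real (n ^ k))) \<longlongrightarrow> \<infinity>) sequentially"
        unfolding filterlim_sequentially_Suc[symmetric, where f = "\<lambda>k. op_rank (\<lambda>x. D x - (phi_map n T ^^ k) D x) / ennreal (real (n ^ k))"]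
        by (simp add: seq3eq inf topdiv del: funpow.simps)
      moreover have "(\<infinity>::ennreal) = ennreal (real (n - 1)) * \<infinity>" using n1 by (simp add: ennreal_mult_top)
      ultimately show "\<exists>L. ((\<lambda>k. op_rank (\<lambda>x. D x - (phi_map n T ^^ k) D x) / ennreal (real (n ^ k))) \<longlongrightarrow> L) sequentially \<and>
          \<infinity> = ennreal (real (n - 1)) * L" by blast
      show "(\<infinity>::ennreal) < \<infinity> \<longleftrightarrow> op_rank (\<lambda>x. D x - phi_map n T D x) < \<infinity>"
        by (simp add: rank0 True)
    qed
  next
    case False
    then have "cdim (M 0) < \<infinity>" by (simp add: top.not_eq_extremum)
    then obtain F0 where F0: "finite F0" "M 0 \<subseteq> cv.span F0" using cdim_finite_span by blast
    have fd: "\<exists>F. finite F \<and> M k \<subseteq> cv.span F" for k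
    proof (induction k)
      case 0 then show ?case using F0 by blast
    next
      case (Suc k)
      then obtain F where F: "finite F" "M k \<subseteq> cv.span F" by blast
      define F' where "F' = F0 \<union> (\<Union>i<n. T i ` F)"
      have "finite F'" using F F0 by (simp add: F'_def)
      moreover have "M (Suc k) \<subseteq> cv.span F'"
        unfolding MSuc
      proof (rule span_sub_span)
        have "range Sq \<subseteq> cv.span F'"
        proof -
          have "range Sq \<subseteq> M 0" by (rule RS)
          also have "\<dots> \<subseteq> cv.span F0" by (rule F0(2))
          also have "\<dots> \<subseteq> cv.span F'" by (rule cv.span_mono) (simp add: F'_def)
          finally show ?thesis .
        qed
        moreover have "T i ` M k \<subseteq> cv.span F'" if i: "i < n" for i
        proof -
          have "T i ` M k \<subseteq> T i ` cv.span F" using F(2) by blast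
          also have "\<dots> = cv.span (T i ` F)" by (rule span_clin_image[OF T_clin[OF i]])
          also have "\<dots> \<subseteq> cv.span F'" by (rule cv.span_mono) (use i in \<open>auto simp: F'_def\<close>)
          finally show ?thesis .
        qed
        ultimately show "range Sq \<union> (\<Union>i<n. T i ` M k) \<subseteq> cv.span F'" by blast
      qed
      ultimately show ?case by blast
    qed
    define dd where "dd k = cv.dim (M k)" for k
    have cd: "cdim (M k) = ennreal (real (dd k))" for k
      using fd[of k] cdim_fin_dim by (auto simp: dd_def)
    have mono: "dd k \<le> dd (Suc k)" for k
    proof -
      have "M k \<subseteq> cv.span (M (Suc k))" using M_Suc_mono by (simp add: M_span)
      then have "cdim (M k) \<le> cdim (M (Suc k))" by (rule cdim_mono)
      then show ?thesis by (simp add: cd)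
    qed
    have Xsub: "M (Suc (Suc k)) \<subseteq> cv.span (M (Suc k) \<union> (\<Union>i<n. T i ` M (Suc k)))" for k
      unfolding MSuc[of "Suc k"] by (rule cv.span_mono) (use RS in blast)
    have i0: "dd (Suc 0) \<le> dd 0 + n * dd 0"
    proof -
      obtain F where F: "finite F" "M 0 \<subseteq> cv.span F" using fd by blast
      have d0: "cv.dim (cv.span ({}::'a set)) = 0"
        using cv.dim_span_eq_card_independent[OF cv.independent_empty] by simp
      have X: "M (Suc 0) \<subseteq> cv.span (M 0 \<union> (\<Union>i<n. T i ` M 0))"
        unfolding MSuc[of 0] by (rule cv.span_mono) (use RS in blast)
      have "cv.dim (M (Suc 0)) \<le> cv.dim (M 0) + n * (cv.dim (M 0) - cv.dim (cv.span ({}::'a set)))"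
      proof (rule dim_increment[OF T_clin _ M_span _ F(2) F(1) _ X])
        show "cv.span (cv.span {}) = cv.span {}" by (simp add: cv.span_span)
        show "cv.span {} \<subseteq> M 0" using cv.subspace_0[OF M_subspace] by simp
        show "T i ` cv.span {} \<subseteq> M 0" if "i < n" for i
          using cv.subspace_0[OF M_subspace] clin_zero[OF T_clin[OF that]] by simp
      qed
      then show ?thesis using d0 by (simp add: dd_def)
    qed
    have iS: "dd (Suc (Suc k)) \<le> dd (Suc k) + n * (dd (Suc k) - dd k)" for k
    proof -
      obtain F where F: "finite F" "M (Suc k) \<subseteq> cv.span F" using fd by blast
      have "cv.dim (M (Suc (Suc k))) \<le> cv.dim (M (Suc k)) + n * (cv.dim (M (Suc k)) - cv.dim (M k))"
        by (rule dim_increment[OF T_clin M_span M_span M_Suc_mono F(2) F(1) TM Xsub])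
      then show ?thesis by (simp add: dd_def)
    qed
    define g where "g k = real (dd k) / real (\<Sum>j\<le>k. n ^ j)" for k
    have dec: "decseq g" unfolding g_def by (rule ratio_dec[OF mono i0 iS])
    have g0: "\<forall>i. 0 \<le> g i" unfolding g_def by (intro allI divide_nonneg_nonneg of_nat_0_le_iff)
    obtain c where gc: "g \<longlonglongrightarrow> c" by (rule decseq_convergent[OF dec g0])
    have c0: "0 \<le> c" by (rule LIMSEQ_le_const[OF gc]) (use g0 in blast)
    have seq: "cdim (M k) / ennreal (real (\<Sum>j\<le>k. n ^ j)) = ennreal (g k)" for k
      unfolding cd g_def by (rule divide_ennreal[OF of_nat_0_le_iff Spos])
    have glim: "((\<lambda>k. ennreal (g k)) \<longlongrightarrow> ennreal c) sequentially"
      by (rule tendsto_ennrealI[OF gc])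
    define L where "L = ennreal (c * (1 / (real n - 1)))"
    have h3: "(\<lambda>j. real (dd j) / real (n ^ Suc j)) \<longlonglongrightarrow> c * (1 / (real n - 1))"
    proof -
      have eq: "real (dd j) / real (n ^ Suc j) = g j * (real (\<Sum>i\<le>j. n ^ i) / real (n ^ Suc j))" for j
        using Spos[of j] by (simp add: g_def)
      show ?thesis unfolding eq by (rule tendsto_mult[OF gc geom_ratio_lim[OF assms(1)]])
    qed
    show ?thesis
    proof (rule exI[of _ "ennreal c"], intro conjI)
      show "((\<lambda>k. cdim (M_space n T D k) / ennreal (real (\<Sum>j\<le>k. n ^ j))) \<longlongrightarrow> ennreal c) sequentially"
        unfolding seq1eq seq by (rule glim)
      show "((\<lambda>k. op_rank (\<lambda>h. poisson_K_adj n T D (fock_proj k (poisson_K n T D h)))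
            / ennreal (real (\<Sum>j\<le>k. n ^ j))) \<longlongrightarrow> ennreal c) sequentially"
        unfolding seq2eq seq by (rule glim)
      have "((\<lambda>k. op_rank (\<lambda>x. D x - (phi_map n T ^^ k) D x) / ennreal (real (n ^ k))) \<longlongrightarrow> L) sequentially"
      proof -
        have e: "op_rank (\<lambda>x. D x - (phi_map n T ^^ Suc j) D x) / ennreal (real (n ^ Suc j))
               = ennreal (real (dd j) / real (n ^ Suc j))" for j
          using npos[of "Suc j"] by (simp only: seq3eq cd divide_ennreal of_nat_0_le_iff)
        have "((\<lambda>j. ennreal (real (dd j) / real (n ^ Suc j))) \<longlongrightarrow> L) sequentially"
          unfolding L_def by (rule tendsto_ennrealI[OF h3])
        then have "((\<lambda>j. op_rank (\<lambda>x. D x - (phi_map n T ^^ Suc j) D x) / ennreal (real (n ^ Suc j))) \<longlongrightarrow> L) sequentially"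
          by (simp only: e)
        then show ?thesis
          using filterlim_sequentially_Suc[where f = "\<lambda>k. op_rank (\<lambda>x. D x - (phi_map n T ^^ k) D x) / ennreal (real (n ^ k))"]
          by simp
      qed
      moreover have "ennreal c = ennreal (real (n - 1)) * L"
      proof -
        have r: "real (n - 1) = real n - 1" using assms(1) by (simp add: of_nat_diff)
        have pos: "0 < real n - 1" using assms(1) by simp
        have "ennreal (real (n - 1)) * L = ennreal ((real n - 1) * (c * (1 / (real n - 1))))"
          unfolding L_def r using pos c0 by (intro ennreal_mult[symmetric]) auto
        also have "(real n - 1) * (c * (1 / (real n - 1))) = c" using pos by simp
        finally show ?thesis by simp
      qed
      ultimately show "\<exists>L. ((\<lambda>k. op_rank (\<lambda>x. D x - (phi_map n T ^^ k) D x) / ennreal (real (n ^ k))) \<longlongrightarrow> L) sequentially \<and>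
          ennreal c = ennreal (real (n - 1)) * L" by blast
      show "ennreal c < \<infinity> \<longleftrightarrow> op_rank (\<lambda>x. D x - phi_map n T D x) < \<infinity>"
        by (simp add: rank0 cd)
    qed
  qed
qed

end
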